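(* The model (P) is feasible and has an optimal solution at an extreme point of its feasible region.
   Context: Model (P) is a multistage stochastic closed-loop EV battery recycling model. Index sets: zones $\mathcal{Z}$; time periods $t\in\mathcal{T}=\{1,\dots,T\}$; planning periods $l\in\mathcal{L}$, with $\mathcal{T}_l$ the periods of planning period $l$ and $l_t$ the planning period of $t$; stages $\sigma\in\mathcal{S}$ with $\sigma_t$ the stage of period $t$; scenario tree nodes $\Omega_\sigma$ at stage $\sigma$ with probabilities $p_\omega$, and $a_\omega(t)$ the ancestor of node $\omega$ at stage $\sigma_t$; battery chemistries $\mathcal{I}$; recycling processes $\mathcal{J}$; materials $\mathcal{K}$ with cathode powders $\mathcal{K}^{\text{CP}}\subset\mathcal{K}$; recycling facility indices $\mathcal{N}^{\text{REC}}_l$ and cathode production line indices $\mathcal{N}^{\text{CP}}_{l,k}$. Operational variables $x\ge 0$ are indexed by $(\omega,z,t,\cdot)$ with $\omega\in\Omega_{\sigma_t}$; capacity variables $y\ge0$ are $y^{\text{REC}}_{z,l,j,n}$ and $y^{\text{CP}}_{z,l,k,n}$. Constraints (all for $t\in\mathcal{T}$, $z\in\mathcal{Z}$, $\omega\in\Omega_{\sigma_t}$ unless stated): (Production) $\sum_{i} \Delta^{\text{NB}}_{i,k} d_{\omega,z,t,i} = x^{\text{NM,NB}}_{\omega,z,t,k} + x^{\text{INV,NB}}_{\omega,z,t,k}$ for $k\in\mathcal{K}^{\text{CP}}$; $\sum_{i} \Delta^{\text{NB}}_{i,k} d_{\omega,z,t,i} = x^{\text{NM,NB}}_{\omega,z,t,k}$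 for $k\in\mathcal{K}\setminus\mathcal{K}^{\text{CP}}$; $\sum_{k'\in\mathcal{K}^{\text{CP}}}\Delta^{\text{CP}}_{k',k}x^{\text{CP,INV}}_{\omega,z,t,k'} = x^{\text{NM,CP}}_{\omega,z,t,k}+x^{\text{MC,CP}}_{\omega,z,t,k}$ and $\sum_{k'\in\mathcal{K}\setminus\mathcal{K}^{\text{CP}}}\Delta^{\text{MC}}_{k',k}x^{\text{MC,CP}}_{\omega,z,t,k'} = x^{\text{INV,MC}}_{\omega,z,t,k}$ for $k\in\mathcal{K}\setminus\mathcal{K}^{\text{CP}}$; $x^{\text{RM,INV}}_{\omega,z,t,k}+x^{\text{RM,S}}_{\omega,z,t,k}=\sum_{i,j}\Delta^{\text{REC}}_{k,i,j}x^{\text{RB,RM}}_{\omega,z,t,i,j}$ for $k\in\mathcal{K}$. (Inventory balance) $x^{\text{RB}}_{\omega,z,0,i}=0$, $x^{\text{INV}}_{\omega,z,0,k}=0$; with $\omega'=a_\omega(t-1)$: $x^{\text{RB}}_{\omega,z,t,i}=x^{\text{RB}}_{\omega',z,t-1,i}+\sum_{z'\ne z}(x^{\text{TR,RB}}_{\omega,z',z,t,i}-x^{\text{TR,RB}}_{\omega,z,z',t,i})+s_{\omega,z,t,i}-\sum_j x^{\text{RB,RM}}_{\omega,z,t,i,j}$; for $k\in\mathcal{K}\setminus\mathcal{K}^{\text{CP}}$: $x^{\text{INV}}_{\omega,z,t,k}=x^{\text{INV}}_{\omega',z,t-1,k}+\sum_{z'\ne z}(x^{\text{TR,RM}}_{\omega,z',z,t,k}-x^{\text{TR,RM}}_{\omega,z,z',t,k})+x^{\text{RM,INV}}_{\omega,z,t,k}-x^{\text{INV,MC}}_{\omega,z,t,k}$;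 for $k\in\mathcal{K}^{\text{CP}}$: the same with $+x^{\text{RM,INV}}_{\omega,z,t,k}+x^{\text{CP,INV}}_{\omega,z,t,k}-x^{\text{INV,NB}}_{\omega,z,t,k}$ as the last terms. (Capacity) for $t\in\mathcal{T}_l$: $\sum_{n\in\mathcal{N}^{\text{REC}}_l}y^{\text{REC}}_{z,l,j,n}\ge\sum_i x^{\text{RB,RM}}_{\omega,z,t,i,j}$ and $\sum_{n\in\mathcal{N}^{\text{CP}}_{l,k}}y^{\text{CP}}_{z,l,k,n}\ge x^{\text{CP,INV}}_{\omega,z,t,k}$ ($k\in\mathcal{K}^{\text{CP}}$); total capacities $\sum_n y^{\text{REC}}_{z,l,j,n}$ and $\sum_n y^{\text{CP}}_{z,l,k,n}$ are nondecreasing in $l$; $y^{\text{REC}}_{z,l,j,n}\le u^{\text{REC}}$, $y^{\text{CP}}_{z,l,k,n}\le u^{\text{CP}}$. Objective: minimize $\sum_{t}(1-\gamma)^{t-1}\big(C^{\text{PL}}_t(y)+\sum_{\omega\in\Omega_{\sigma_t}}p_\omega C^{\text{OP}}_{\omega,t}(x)\big)$, where the linear operational cost is $C^{\text{OP}}_{\omega,t}(x)=\sum_z\big(\sum_{k}c^{\text{NB,NM}}_{\omega,t,k}x^{\text{NM,NB}}_{\omega,z,t,k}+\sum_{k\notin\mathcal{K}^{\text{CP}}}(c^{\text{CP,NM}}_{\omega,t,k}x^{\text{NM,CP}}_{\omega,z,t,k}+c^{\text{MC}}_{\omega,z,t,k}x^{\text{MC,CP}}_{\omega,z,t,k})+\sum_k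 v_{\omega,t,k}(\rho x^{\text{INV}}_{\omega,z,t,k}-\eta x^{\text{RM,S}}_{\omega,z,t,k})+\sum_{k\in\mathcal{K}^{\text{CP}}}c^{\text{CP}}_{\omega,z,t,k}x^{\text{CP,INV}}_{\omega,z,t,k}+\sum_{i,j}c^{\text{REC}}_{\omega,z,t,i,j}x^{\text{RB,RM}}_{\omega,z,t,i,j}+\sum_{z'\ne z}(\sum_k c^{\text{TR,RM}}_{z,z'}x^{\text{TR,RM}}_{\omega,z,z',t,k}+\sum_i c^{\text{TR,RB}}_{z,z'}x^{\text{TR,RB}}_{\omega,z,z',t,i})\big)$ with $\eta\le1$ and $\rho$ proportions, and the planning cost is $C^{\text{PL}}_t(y)=\sum_z\big(\sum_j\sum_{n\in\mathcal{N}^{\text{REC}}_{l_t}}f^{\text{REC}}_{z,j}(y^{\text{REC}}_{z,l_t,j,n})+\sum_{k\in\mathcal{K}^{\text{CP}}}\sum_{n\in\mathcal{N}^{\text{CP}}_{l_t,k}}f^{\text{CP}}_{z,k}(y^{\text{CP}}_{z,l_t,k,n})\big)$, with each $f(y)=\sum_i q_iy^{r_i}+w$ for $y>0$, $f(0)=0$, $r_i\in(0,1]$, $q_i,w\ge0$. Thus (P) is a separable concave minimization over a polyhedron in the nonnegative orthant. Assumption: the parameters $d,s,c,v,p,\Delta$ are nonnegative, $u^{\text{REC}},u^{\text{CP}}$ are positive, $\gamma\in[0,1)$, and the functions $f$ are concave, monotonic increasing, with $f(0)=0$. *)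

theory Defs
  imports "HOL-Analysis.Analysis"
begin

text \<open>Zones, chemistries, processes and materials are finite types 'z, 'i, 'j, 'k
  (the material set K is the whole type 'k, cathode powders K^CP are the set KCP).\<close>

record ('w, 'z, 'i, 'j, 'k) rcmodel =
  horizon :: nat                          \<comment> \<open>T; periods are 1..T\<close>
  stage :: "nat \<Rightarrow> nat"
  nodes :: "nat \<Rightarrow> 'w set"
  anc :: "'w \<Rightarrow> nat \<Rightarrow> 'w"
  prob :: "'w \<Rightarrow> real"
  Lset :: "nat set"
  lper :: "nat \<Rightarrow> nat"
  NREC :: "nat \<Rightarrow> nat set"
  NCP :: "nat \<Rightarrow> 'k \<Rightarrow> nat set"
  KCP :: "'k set"
  dem :: "'w \<Rightarrow> 'z \<Rightarrow> nat \<Rightarrow> 'i \<Rightarrow> real"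
  supp :: "'w \<Rightarrow> 'z \<Rightarrow> nat \<Rightarrow> 'i \<Rightarrow> real"
  DNB :: "'i \<Rightarrow> 'k \<Rightarrow> real"
  DCP :: "'k \<Rightarrow> 'k \<Rightarrow> real"
  DMC :: "'k \<Rightarrow> 'k \<Rightarrow> real"
  DREC :: "'k \<Rightarrow> 'i \<Rightarrow> 'j \<Rightarrow> real"
  cNBNM :: "'w \<Rightarrow> nat \<Rightarrow> 'k \<Rightarrow> real"
  cCPNM :: "'w \<Rightarrow> nat \<Rightarrow> 'k \<Rightarrow> real"
  cMC :: "'w \<Rightarrow> 'z \<Rightarrow> nat \<Rightarrow> 'k \<Rightarrow> real"
  cCP :: "'w \<Rightarrow> 'z \<Rightarrow> nat \<Rightarrow> 'k \<Rightarrow> real"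
  val :: "'w \<Rightarrow> nat \<Rightarrow> 'k \<Rightarrow> real"
  cREC :: "'w \<Rightarrow> 'z \<Rightarrow> nat \<Rightarrow> 'i \<Rightarrow> 'j \<Rightarrow> real"
  cTRRM :: "'z \<Rightarrow> 'z \<Rightarrow> real"
  cTRRB :: "'z \<Rightarrow> 'z \<Rightarrow> real"
  rho :: real
  eta :: real
  gamma :: real
  uREC :: real
  uCP :: real
  \<comment> \<open>f^REC_{z,j}(y) = sum_{i<mREC z j} qREC z j i * y^(rREC z j i) + wREC z j for y > 0\<close>
  qREC :: "'z \<Rightarrow> 'j \<Rightarrow> nat \<Rightarrow> real"
  rREC :: "'z \<Rightarrow> 'j \<Rightarrow> nat \<Rightarrow> real"
  mREC :: "'z \<Rightarrow> 'j \<Rightarrow> nat"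
  wREC :: "'z \<Rightarrow> 'j \<Rightarrow> real"
  qCP :: "'z \<Rightarrow> 'k \<Rightarrow> nat \<Rightarrow> real"
  rCP :: "'z \<Rightarrow> 'k \<Rightarrow> nat \<Rightarrow> real"
  mCP :: "'z \<Rightarrow> 'k \<Rightarrow> nat"
  wCP :: "'z \<Rightarrow> 'k \<Rightarrow> real"

datatype ('w, 'z, 'i, 'j, 'k) rcvar =
    XNMNB 'w 'z nat 'k | XINVNB 'w 'z nat 'k | XCPINV 'w 'z nat 'k
  | XNMCP 'w 'z nat 'k | XMCCP 'w 'z nat 'k | XINVMC 'w 'z nat 'k
  | XRMINV 'w 'z nat 'k | XRMS 'w 'z nat 'k | XINV 'w 'z nat 'k
  | XRB 'w 'z nat 'i | XRBRM 'w 'z nat 'i 'j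
  | XTRRB 'w 'z 'z nat 'i | XTRRM 'w 'z 'z nat 'k
  | YREC 'z nat 'j nat | YCP 'z nat 'k nat

type_synonym ('w, 'z, 'i, 'j, 'k) rcpoint = "('w, 'z, 'i, 'j, 'k) rcvar \<Rightarrow> real"

definition periods :: "('w, 'z, 'i, 'j, 'k) rcmodel \<Rightarrow> nat set" where
  "periods M = {1..horizon M}"

definition node_ok :: "('w, 'z, 'i, 'j, 'k) rcmodel \<Rightarrow> 'w \<Rightarrow> nat \<Rightarrow> bool" where
  "node_ok M w t \<longleftrightarrow> t \<in> periods M \<and> w \<in> nodes M (stage M t)"

fun valid_var :: "('w, 'z, 'i, 'j, 'k) rcmodel \<Rightarrow> ('w, 'z, 'i, 'j, 'k) rcvar \<Rightarrow> bool" where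
  "valid_var M (XNMNB w z t k) = node_ok M w t"
| "valid_var M (XINVNB w z t k) = (node_ok M w t \<and> k \<in> KCP M)"
| "valid_var M (XCPINV w z t k) = (node_ok M w t \<and> k \<in> KCP M)"
| "valid_var M (XNMCP w z t k) = (node_ok M w t \<and> k \<notin> KCP M)"
| "valid_var M (XMCCP w z t k) = (node_ok M w t \<and> k \<notin> KCP M)"
| "valid_var M (XINVMC w z t k) = (node_ok M w t \<and> k \<notin> KCP M)"
| "valid_var M (XRMINV w z t k) = node_ok M w t"
| "valid_var M (XRMS w z t k) = node_ok M w t"
| "valid_var M (XINV w z t k) = node_ok M w t"
| "valid_var M (XRB w z t i) = node_ok M w t"
| "valid_var M (XRBRM w z t i j) = node_ok M w t"
| "valid_var M (XTRRB w z z' t i) = (node_ok M w t \<and> z \<noteq> z')"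
| "valid_var M (XTRRM w z z' t k) = (node_ok M w t \<and> z \<noteq> z')"
| "valid_var M (YREC z l j n) = (l \<in> Lset M \<and> n \<in> NREC M l)"
| "valid_var M (YCP z l k n) = (l \<in> Lset M \<and> k \<in> KCP M \<and> n \<in> NCP M l k)"

definition prevRB :: "('w, 'z, 'i, 'j, 'k) rcmodel \<Rightarrow> ('w, 'z, 'i, 'j, 'k) rcpoint
    \<Rightarrow> 'w \<Rightarrow> 'z \<Rightarrow> nat \<Rightarrow> 'i \<Rightarrow> real" where
  "prevRB M x w z t i = (if t = 1 then 0 else x (XRB (anc M w (t - 1)) z (t - 1) i))"

definition prevINV :: "('w, 'z, 'i, 'j, 'k) rcmodel \<Rightarrow> ('w, 'z, 'i, 'j, 'k) rcpoint
    \<Rightarrow> 'w \<Rightarrow> 'z \<Rightarrow> nat \<Rightarrow> 'k \<Rightarrow> real" where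
  "prevINV M x w z t k = (if t = 1 then 0 else x (XINV (anc M w (t - 1)) z (t - 1) k))"

definition capREC :: "('w, 'z, 'i, 'j, 'k) rcmodel \<Rightarrow> ('w, 'z, 'i, 'j, 'k) rcpoint
    \<Rightarrow> 'z \<Rightarrow> nat \<Rightarrow> 'j \<Rightarrow> real" where
  "capREC M x z l j = (\<Sum>n\<in>NREC M l. x (YREC z l j n))"

definition capCP :: "('w, 'z, 'i, 'j, 'k) rcmodel \<Rightarrow> ('w, 'z, 'i, 'j, 'k) rcpoint
    \<Rightarrow> 'z \<Rightarrow> nat \<Rightarrow> 'k \<Rightarrow> real" where
  "capCP M x z l k = (\<Sum>n\<in>NCP M l k. x (YCP z l k n))"

definition feasible :: "('w, 'z::finite, 'i::finite, 'j::finite, 'k::finite) rcmodel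
    \<Rightarrow> ('w, 'z, 'i, 'j, 'k) rcpoint \<Rightarrow> bool" where
  "feasible M x \<longleftrightarrow>
     \<comment> \<open>variables exist only on the index set of (P); all are nonnegative\<close>
     (\<forall>v. \<not> valid_var M v \<longrightarrow> x v = 0) \<and>
     (\<forall>v. valid_var M v \<longrightarrow> 0 \<le> x v) \<and>
     (\<forall>t\<in>periods M. \<forall>w\<in>nodes M (stage M t). \<forall>z.
        \<comment> \<open>production\<close>
        (\<forall>k\<in>KCP M. (\<Sum>i\<in>UNIV. DNB M i k * dem M w z t i)
                      = x (XNMNB w z t k) + x (XINVNB w z t k)) \<and>
        (\<forall>k. k \<notin> KCP M \<longrightarrow> (\<Sum>i\<in>UNIV. DNB M i k * dem M w z t i) = x (XNMNB w z t k)) \<and>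
        (\<forall>k. k \<notin> KCP M \<longrightarrow> (\<Sum>k'\<in>KCP M. DCP M k' k * x (XCPINV w z t k'))
                      = x (XNMCP w z t k) + x (XMCCP w z t k)) \<and>
        (\<forall>k. k \<notin> KCP M \<longrightarrow> (\<Sum>k'\<in>- KCP M. DMC M k' k * x (XMCCP w z t k'))
                      = x (XINVMC w z t k)) \<and>
        (\<forall>k. x (XRMINV w z t k) + x (XRMS w z t k)
                = (\<Sum>i\<in>UNIV. \<Sum>j\<in>UNIV. DREC M k i j * x (XRBRM w z t i j))) \<and>
        \<comment> \<open>inventory balance\<close>
        (\<forall>i. x (XRB w z t i) = prevRB M x w z t i
              + (\<Sum>z'\<in>- {z}. x (XTRRB w z' z t i) - x (XTRRB w z z' t i))
              + supp M w z t i - (\<Sum>j\<in>UNIV. x (XRBRM w z t i j))) \<and>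
        (\<forall>k. k \<notin> KCP M \<longrightarrow> x (XINV w z t k) = prevINV M x w z t k
              + (\<Sum>z'\<in>- {z}. x (XTRRM w z' z t k) - x (XTRRM w z z' t k))
              + x (XRMINV w z t k) - x (XINVMC w z t k)) \<and>
        (\<forall>k\<in>KCP M. x (XINV w z t k) = prevINV M x w z t k
              + (\<Sum>z'\<in>- {z}. x (XTRRM w z' z t k) - x (XTRRM w z z' t k))
              + x (XRMINV w z t k) + x (XCPINV w z t k) - x (XINVNB w z t k)) \<and>
        \<comment> \<open>capacity (t belongs to planning period l_t)\<close>
        (\<forall>j. capREC M x z (lper M t) j \<ge> (\<Sum>i\<in>UNIV. x (XRBRM w z t i j))) \<and>
        (\<forall>k\<in>KCP M. capCP M x z (lper M t) k \<ge> x (XCPINV w z t k))) \<and>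
     \<comment> \<open>total capacities nondecreasing in l\<close>
     (\<forall>z. \<forall>l\<in>Lset M. \<forall>l'\<in>Lset M. l \<le> l' \<longrightarrow>
        (\<forall>j. capREC M x z l j \<le> capREC M x z l' j) \<and>
        (\<forall>k\<in>KCP M. capCP M x z l k \<le> capCP M x z l' k)) \<and>
     \<comment> \<open>capacity upper bounds\<close>
     (\<forall>z l j n. x (YREC z l j n) \<le> uREC M) \<and>
     (\<forall>z l k n. x (YCP z l k n) \<le> uCP M)"

definition feasible_region :: "('w, 'z::finite, 'i::finite, 'j::finite, 'k::finite) rcmodel
    \<Rightarrow> ('w, 'z, 'i, 'j, 'k) rcpoint set" where
  "feasible_region M = {x. feasible M x}"

definition capcost :: "(nat \<Rightarrow> real) \<Rightarrow> (nat \<Rightarrow> real) \<Rightarrow> nat \<Rightarrow> real \<Rightarrow> real \<Rightarrow> real" where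
  "capcost q r m w y = (if y > 0 then (\<Sum>i<m. q i * y powr r i) + w else 0)"

definition fREC :: "('w, 'z, 'i, 'j, 'k) rcmodel \<Rightarrow> 'z \<Rightarrow> 'j \<Rightarrow> real \<Rightarrow> real" where
  "fREC M z j = capcost (qREC M z j) (rREC M z j) (mREC M z j) (wREC M z j)"

definition fCP :: "('w, 'z, 'i, 'j, 'k) rcmodel \<Rightarrow> 'z \<Rightarrow> 'k \<Rightarrow> real \<Rightarrow> real" where
  "fCP M z k = capcost (qCP M z k) (rCP M z k) (mCP M z k) (wCP M z k)"

definition CPL :: "('w, 'z::finite, 'i::finite, 'j::finite, 'k::finite) rcmodel
    \<Rightarrow> ('w, 'z, 'i, 'j, 'k) rcpoint \<Rightarrow> nat \<Rightarrow> real" where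
  "CPL M x t = (\<Sum>z\<in>UNIV.
      (\<Sum>j\<in>UNIV. \<Sum>n\<in>NREC M (lper M t). fREC M z j (x (YREC z (lper M t) j n)))
    + (\<Sum>k\<in>KCP M. \<Sum>n\<in>NCP M (lper M t) k. fCP M z k (x (YCP z (lper M t) k n))))"

definition COP :: "('w, 'z::finite, 'i::finite, 'j::finite, 'k::finite) rcmodel
    \<Rightarrow> ('w, 'z, 'i, 'j, 'k) rcpoint \<Rightarrow> 'w \<Rightarrow> nat \<Rightarrow> real" where
  "COP M x w t = (\<Sum>z\<in>UNIV.
      (\<Sum>k\<in>UNIV. cNBNM M w t k * x (XNMNB w z t k))
    + (\<Sum>k\<in>- KCP M. cCPNM M w t k * x (XNMCP w z t k) + cMC M w z t k * x (XMCCP w z t k))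
    + (\<Sum>k\<in>UNIV. val M w t k * (rho M * x (XINV w z t k) - eta M * x (XRMS w z t k)))
    + (\<Sum>k\<in>KCP M. cCP M w z t k * x (XCPINV w z t k))
    + (\<Sum>i\<in>UNIV. \<Sum>j\<in>UNIV. cREC M w z t i j * x (XRBRM w z t i j))
    + (\<Sum>z'\<in>- {z}. (\<Sum>k\<in>UNIV. cTRRM M z z' * x (XTRRM w z z' t k))
                    + (\<Sum>i\<in>UNIV. cTRRB M z z' * x (XTRRB w z z' t i))))"

definition objective :: "('w, 'z::finite, 'i::finite, 'j::finite, 'k::finite) rcmodel
    \<Rightarrow> ('w, 'z, 'i, 'j, 'k) rcpoint \<Rightarrow> real" where
  "objective M x = (\<Sum>t\<in>periods M. (1 - gamma M) ^ (t - 1) *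
      (CPL M x t + (\<Sum>w\<in>nodes M (stage M t). prob M w * COP M x w t)))"

text \<open>The library notion extreme_point_of needs a real_vector type; the space of
  functions rcvar => real carries no such instance, so we write out its definition
  (x in S and x lies in no open segment between two distinct points of S) with
  pointwise convex combinations.\<close>
definition fun_extreme_point_of :: "('a \<Rightarrow> real) \<Rightarrow> ('a \<Rightarrow> real) set \<Rightarrow> bool" where
  "fun_extreme_point_of x S \<longleftrightarrow> x \<in> S \<and>
     \<not> (\<exists>a\<in>S. \<exists>b\<in>S. \<exists>u. a \<noteq> b \<and> 0 < u \<and> u < 1 \<and> x = (\<lambda>v. (1 - u) * a v + u * b v))"

end

theory Submission
  imports Defs
begin

definition comb :: "('v \<Rightarrow> real) \<Rightarrow> ('v \<Rightarrow> real) \<Rightarrow> real \<Rightarrow> ('v \<Rightarrow> real)" where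
  "comb a b u = (\<lambda>v. (1 - u) * a v + u * b v)"

definition Lf :: "(('v \<Rightarrow> real) \<Rightarrow> real) \<Rightarrow> bool" where
  "Lf g \<longleftrightarrow> (\<forall>a b u. g (comb a b u) = (1 - u) * g a + u * g b)"

lemma LfD: "Lf g \<Longrightarrow> g (comb a b u) = (1 - u) * g a + u * g b"
  by (simp add: Lf_def)

lemma comb_comb: "comb (comb a b p) (comb a b q) t = comb a b ((1 - t) * p + t * q)"
  by (rule ext) (simp add: comb_def algebra_simps)

lemma comb_swap: "comb b a (1 - u) = comb a b u"
  by (rule ext) (simp add: comb_def algebra_simps)

lemma comb_0[simp]: "comb a b 0 = a" and comb_1[simp]: "comb a b 1 = b"
  by (auto simp: comb_def)

locale polyh =
  fixes S :: "('v \<Rightarrow> real) set" and C :: "(('v \<Rightarrow> real) \<Rightarrow> real) set"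
    and f :: "('v \<Rightarrow> real) \<Rightarrow> real" and B :: real
  assumes finC: "finite C"
    and LfC: "\<And>g. g \<in> C \<Longrightarrow> Lf g"
    and line: "\<And>a b s. a \<in> S \<Longrightarrow> b \<in> S \<Longrightarrow> (\<forall>g\<in>C. g (comb a b s) \<le> 0) \<Longrightarrow> comb a b s \<in> S"
    and CS: "\<And>x g. x \<in> S \<Longrightarrow> g \<in> C \<Longrightarrow> g x \<le> 0"
    and pointed: "\<And>a b. a \<in> S \<Longrightarrow> b \<in> S \<Longrightarrow> a \<noteq> b \<Longrightarrow> \<exists>g\<in>C. g a \<noteq> g b"
    and conc: "\<And>a b u. a \<in> S \<Longrightarrow> b \<in> S \<Longrightarrow> 0 \<le> u \<Longrightarrow> u \<le> 1 \<Longrightarrow>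
                  (1 - u) * f a + u * f b \<le> f (comb a b u)"
    and bdd: "\<And>x. x \<in> S \<Longrightarrow> B \<le> f x"
begin

definition act where "act x = {g\<in>C. g x = 0}"

lemma phi: "g \<in> C \<Longrightarrow> g (comb a b s) = g a + s * (g b - g a)"
  using LfD[OF LfC] by (simp add: algebra_simps)

lemma act_keep:
  assumes a: "a \<in> S" and b: "b \<in> S" and u: "0 < u" "u < 1"
  shows "act (comb a b u) \<subseteq> act (comb a b s)"
proof
  fix g assume "g \<in> act (comb a b u)"
  then have g: "g \<in> C" "g (comb a b u) = 0" by (auto simp: act_def)
  have ga: "g a \<le> 0" "g b \<le> 0" using CS a b g by auto
  have "(1 - u) * g a + u * g b = 0" using g phi[OF g(1)] by (simp add: algebra_simps)
  moreover have "(1 - u) * g a \<le> 0" "u * g b \<le> 0" using ga u by (auto simp: mult_nonneg_nonpos)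
  ultimately have "(1 - u) * g a = 0" "u * g b = 0" by linarith+
  then have "g a = 0" "g b = 0" using u by auto
  then show "g \<in> act (comb a b s)" using g phi[OF g(1)] by (simp add: act_def)
qed

lemma core:
  assumes a: "a \<in> S" and b: "b \<in> S" and u: "0 < u" "u < 1"
    and U: "{g\<in>C. g a < g b} \<noteq> {}"
  shows "\<exists>y'\<in>S. f y' \<le> f (comb a b u) \<and> act (comb a b u) \<subset> act y'"
proof -
  define U where "U = {g\<in>C. g a < g b}"
  define D where "D = {g\<in>C. g b < g a}"
  define r :: "(('v \<Rightarrow> real) \<Rightarrow> real) \<Rightarrow> real" where "r g = - g a / (g b - g a)" for g
  have finU: "finite U" "finite D" using finC by (auto simp: U_def D_def)
  have UC: "U \<subseteq> C" "D \<subseteq> C" by (auto simp: U_def D_def)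
  have Une: "U \<noteq> {}" using U by (simp add: U_def)
  define sh where "sh = Min (r ` U)"
  have phir: "g (comb a b s) = (g b - g a) * (s - r g)" if "g \<in> C" "g a \<noteq> g b" for g s
  proof -
    have "g (comb a b s) = g a + s * (g b - g a)" using phi[OF that(1)] .
    moreover have "g b - g a \<noteq> 0" using that(2) by simp
    then have "(g b - g a) * r g = - g a" by (simp add: r_def)
    ultimately show ?thesis by (simp add: right_diff_distrib algebra_simps)
  qed
  have rU: "1 \<le> r g" if "g \<in> U" for g
  proof -
    have "g b \<le> 0" using CS b that UC by auto
    then show ?thesis using that by (auto simp: U_def r_def field_simps)
  qed
  have rD: "r g \<le> 0" if "g \<in> D" for g
  proof -
    have "g a \<le> 0" using CS a that UC by auto
    then show ?thesis using that by (auto simp: D_def r_def divide_nonpos_neg)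
  qed
  have sh_le: "sh \<le> r g" if "g \<in> U" for g using finU that by (simp add: sh_def)
  have "sh \<in> r ` U" unfolding sh_def using finU Une by (intro Min_in) auto
  then obtain g0 where g0: "g0 \<in> U" "r g0 = sh" by auto
  have sh1: "1 \<le> sh" using rU g0 by auto
  have inS: "comb a b s \<in> S" if s1: "s \<le> sh" and s2: "\<forall>g\<in>D. r g \<le> s" for s
  proof (rule line[OF a b], intro ballI)
    fix g assume g: "g \<in> C"
    consider "g a = g b" | "g \<in> U" | "g \<in> D" using g by (force simp: U_def D_def)
    then show "g (comb a b s) \<le> 0"
    proof cases
      case 1 then show ?thesis using phi[OF g] CS[OF a g] by simp
    next
      case 2
      then have "0 < g b - g a" "s - r g \<le> 0" using sh_le[OF 2] s1 by (auto simp: U_def)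
      then show ?thesis using phir[OF g] 2 by (auto simp: U_def mult_nonneg_nonpos)
    next
      case 3
      then have "g b - g a < 0" "0 \<le> s - r g" using s2 3 by (auto simp: D_def)
      then show ?thesis using phir[OF g] 3 by (auto simp: D_def mult_nonpos_nonneg)
    qed
  qed
  have new_hi: "act (comb a b u) \<subset> act (comb a b sh)"
  proof -
    have "g0 \<in> C" "g0 a \<noteq> g0 b" using g0 by (auto simp: U_def)
    then have "g0 (comb a b sh) = 0" "g0 (comb a b u) \<noteq> 0"
      using phir[of g0] g0 sh1 u by auto
    then show ?thesis using act_keep[OF a b u, of sh] \<open>g0 \<in> C\<close> by (auto simp: act_def)
  qed
  show ?thesis
  proof (cases "D = {}")
    case True
    have inS': "comb a b s \<in> S" if "s \<le> sh" for s using inS that True by auto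
    have "f (comb a b sh) \<le> f (comb a b u)"
    proof (rule ccontr)
      assume "\<not> ?thesis"
      then have Dp: "0 < f (comb a b sh) - f (comb a b u)" by simp
      define \<Delta> where "\<Delta> = f (comb a b sh) - f (comb a b u)"
      define K where "K = (\<bar>f (comb a b u) - B\<bar> + 1) / \<Delta>"
      have Kp: "0 < K" using Dp by (simp add: K_def \<Delta>_def)
      have KD: "K * \<Delta> = \<bar>f (comb a b u) - B\<bar> + 1" using Dp by (simp add: K_def \<Delta>_def)
      define s where "s = u - K * (sh - u)"
      have shu: "0 < sh - u" using sh1 u by simp
      have "0 \<le> K * (sh - u)" using Kp shu by simp
      then have "s \<le> sh" using shu by (simp add: s_def)
      then have sS: "comb a b s \<in> S" by (rule inS')
      have hS: "comb a b sh \<in> S" by (rule inS') simp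
      define t where "t = K / (K + 1)"
      have t01: "0 \<le> t" "t \<le> 1" using Kp by (auto simp: t_def)
      have e1: "1 - t = 1 / (K + 1)" using Kp by (simp add: t_def field_simps)
      have e2: "s + K * sh = u * (K + 1)" by (simp add: s_def algebra_simps)
      have "(1 - t) * s + t * sh = (s + K * sh) / (K + 1)" using e1 Kp by (simp add: t_def add_divide_distrib)
      also have "\<dots> = u" using e2 Kp by simp
      finally have "(1 - t) * s + t * sh = u" .
      then have eq: "comb (comb a b s) (comb a b sh) t = comb a b u" by (simp add: comb_comb)
      have "(1 - t) * f (comb a b s) + t * f (comb a b sh) \<le> f (comb a b u)"
        using conc[OF sS hS t01] eq by simp
      moreover have "(1 - t) * f (comb a b s) + t * f (comb a b sh)
          = (f (comb a b s) + K * f (comb a b sh)) / (K + 1)"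
        using e1 Kp by (simp add: t_def add_divide_distrib)
      ultimately have "(f (comb a b s) + K * f (comb a b sh)) / (K + 1) \<le> f (comb a b u)" by simp
      then have "f (comb a b s) + K * f (comb a b sh) \<le> f (comb a b u) * (K + 1)"
        using Kp by (simp add: divide_le_eq)
      then have "f (comb a b s) \<le> (K + 1) * f (comb a b u) - K * f (comb a b sh)"
        by (simp add: algebra_simps)
      also have "\<dots> = f (comb a b u) - K * \<Delta>" by (simp add: \<Delta>_def algebra_simps)
      also have "\<dots> < B" using KD by linarith
      finally show False using bdd[OF sS] by simp
    qed
    then show ?thesis using new_hi inS'[of sh] by auto
  next
    case False
    define sl where "sl = Max (r ` D)"
    have "sl \<in> r ` D" unfolding sl_def using finU False by (intro Max_in) auto
    then obtain g1 where g1: "g1 \<in> D" "r g1 = sl" by auto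
    have le_sl: "r g \<le> sl" if "g \<in> D" for g using finU that by (simp add: sl_def)
    have sl0: "sl \<le> 0" using rD g1 by auto
    have hS: "comb a b sh \<in> S" using inS[of sh] le_sl sl0 sh1 by force
    have lS: "comb a b sl \<in> S" using inS[of sl] le_sl sl0 sh1 by force
    have new_lo: "act (comb a b u) \<subset> act (comb a b sl)"
    proof -
      have "g1 \<in> C" "g1 a \<noteq> g1 b" using g1 by (auto simp: D_def)
      then have "g1 (comb a b sl) = 0" "g1 (comb a b u) \<noteq> 0"
        using phir[of g1] g1 sl0 u by auto
      then show ?thesis using act_keep[OF a b u, of sl] \<open>g1 \<in> C\<close> by (auto simp: act_def)
    qed
    define t where "t = (u - sl) / (sh - sl)"
    have t01: "0 \<le> t" "t \<le> 1" using sl0 sh1 u by (auto simp: t_def field_simps)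
    have "t * (sh - sl) = u - sl" using sl0 sh1 by (simp add: t_def)
    then have "(1 - t) * sl + t * sh = u" by (simp add: algebra_simps)
    then have eq: "comb (comb a b sl) (comb a b sh) t = comb a b u" by (simp add: comb_comb)
    have "(1 - t) * f (comb a b sl) + t * f (comb a b sh) \<le> f (comb a b u)"
      using conc[OF lS hS t01] eq by simp
    moreover
    define m where "m = min (f (comb a b sl)) (f (comb a b sh))"
    have "(1 - t) * m \<le> (1 - t) * f (comb a b sl)" "t * m \<le> t * f (comb a b sh)"
      using t01 by (auto simp: m_def intro: mult_left_mono)
    ultimately have "(1 - t) * m + t * m \<le> f (comb a b u)" by linarith
    then have "m \<le> f (comb a b u)" by (simp add: algebra_simps)
    then have "f (comb a b sl) \<le> f (comb a b u) \<or> f (comb a b sh) \<le> f (comb a b u)"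
      by (auto simp: m_def)
    then show ?thesis using hS lS new_hi new_lo by blast
  qed
qed

lemma step:
  assumes y: "y \<in> S" and ne: "\<not> fun_extreme_point_of y S"
  shows "\<exists>y'\<in>S. f y' \<le> f y \<and> act y \<subset> act y'"
proof -
  obtain a b u where ab: "a \<in> S" "b \<in> S" "a \<noteq> b" "0 < u" "u < 1"
    and yeq: "y = (\<lambda>v. (1 - u) * a v + u * b v)"
    using y ne unfolding fun_extreme_point_of_def by blast
  have yc: "y = comb a b u" using yeq by (simp add: comb_def)
  obtain g where g: "g \<in> C" "g a \<noteq> g b" using pointed ab by blast
  show ?thesis
  proof (cases "g a < g b")
    case True
    then show ?thesis using core[OF ab(1,2,4,5)] g yc by blast
  next
    case False
    then have "g b < g a" using g by simp
    then have "{g\<in>C. g b < g a} \<noteq> {}" using g by blast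
    moreover have "y = comb b a (1 - u)" using yc comb_swap by metis
    ultimately show ?thesis using core[OF ab(2,1), of "1 - u"] ab by auto
  qed
qed

lemma act_sub: "act x \<subseteq> C" by (auto simp: act_def)

lemma to_extreme:
  assumes "y \<in> S"
  shows "\<exists>x. fun_extreme_point_of x S \<and> f x \<le> f y"
proof -
  have "\<forall>y. y \<in> S \<longrightarrow> card (C - act y) = n \<longrightarrow> (\<exists>x. fun_extreme_point_of x S \<and> f x \<le> f y)" for n
  proof (induction n rule: less_induct)
    case (less n)
    show ?case
    proof (intro allI impI)
      fix y assume y: "y \<in> S" and n: "card (C - act y) = n"
      show "\<exists>x. fun_extreme_point_of x S \<and> f x \<le> f y"
      proof (cases "fun_extreme_point_of y S")
        case True then show ?thesis by auto
      next
        case False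
        obtain y' where y': "y' \<in> S" "f y' \<le> f y" "act y \<subset> act y'" using step[OF y False] by blast
        have "C - act y' \<subset> C - act y" using y'(3) act_sub[of y'] by blast
        then have "card (C - act y') < n" using n finC by (metis finite_Diff psubset_card_mono)
        then obtain x where "fun_extreme_point_of x S" "f x \<le> f y'" using less y'(1) by blast
        then show ?thesis using y'(2) by auto
      qed
    qed
  qed
  then show ?thesis using assms by blast
qed

lemma act_inj:
  assumes x: "fun_extreme_point_of x S" and x': "fun_extreme_point_of x' S"
    and eq: "act x = act x'"
  shows "x = x'"
proof (rule ccontr)
  assume ne: "x \<noteq> x'"
  have xS: "x \<in> S" "x' \<in> S" using x x' by (auto simp: fun_extreme_point_of_def)
  define Q where "Q = {g\<in>C. g x' - g x < 0}"
  define e where "e = Min (insert 1 ((\<lambda>g. g x / (g x' - g x)) ` Q))"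
  have finQ: "finite Q" using finC by (simp add: Q_def)
  have Qneg: "g x < 0" if "g \<in> Q" for g
  proof -
    have g: "g \<in> C" "g x' < g x" using that by (auto simp: Q_def)
    have "g x \<le> 0" using CS[OF xS(1) g(1)] .
    moreover have "g x \<noteq> 0"
    proof
      assume "g x = 0"
      then have "g \<in> act x" using g by (auto simp: act_def)
      then have "g \<in> act x'" using eq by simp
      then have "g x' = 0" by (simp add: act_def)
      then show False using g \<open>g x = 0\<close> by simp
    qed
    ultimately show ?thesis by simp
  qed
  have epos: "0 < e" unfolding e_def using finQ
  proof (subst Min_gr_iff)
    show "\<forall>a\<in>insert 1 ((\<lambda>g. g x / (g x' - g x)) ` Q). 0 < a"
      using Qneg by (auto simp: Q_def divide_neg_neg)
  qed auto
  have ele: "e \<le> g x / (g x' - g x)" if "g \<in> Q" for g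
    unfolding e_def using finQ that by (intro Min_le) auto
  have e1: "e \<le> 1" unfolding e_def using finQ by (intro Min_le) auto
  define p where "p = comb x x' (- e)"
  have pS: "p \<in> S" unfolding p_def
  proof (rule line[OF xS], intro ballI)
    fix g assume g: "g \<in> C"
    have ph: "g (comb x x' (- e)) = g x - e * (g x' - g x)" using phi[OF g] by simp
    show "g (comb x x' (- e)) \<le> 0"
    proof (cases "g \<in> Q")
      case True
      have "e * (g x' - g x) \<ge> g x / (g x' - g x) * (g x' - g x)"
        using ele[OF True] True by (intro mult_right_mono_neg) (auto simp: Q_def)
      also have "g x / (g x' - g x) * (g x' - g x) = g x" using True by (auto simp: Q_def)
      finally show ?thesis using ph by simp
    next
      case False
      then have "0 \<le> g x' - g x" using g by (auto simp: Q_def)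
      then have "0 \<le> e * (g x' - g x)" using epos by simp
      then show ?thesis using ph CS[OF xS(1) g] by simp
    qed
  qed
  define t where "t = e / (1 + e)"
  have t01: "0 < t" "t < 1" using epos by (auto simp: t_def)
  have "(1 - t) * (- e) + t * 1 = 0" using epos by (simp add: t_def field_simps)
  then have xeq: "x = comb p x' t" unfolding p_def
    using comb_comb[of x x' "- e" 1 t] by simp
  have "p \<noteq> x'"
  proof
    assume "p = x'"
    obtain v where v: "x v \<noteq> x' v" using ne by auto
    have "p v = x v - e * (x' v - x v)" by (simp add: p_def comb_def algebra_simps)
    then have "(1 + e) * (x v - x' v) = 0" using \<open>p = x'\<close> by (simp add: algebra_simps)
    then show False using v epos by simp
  qed
  then show False using x pS xS t01 xeq unfolding fun_extreme_point_of_def comb_def by blast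
qed

lemma finite_extreme: "finite {x. fun_extreme_point_of x S}"
proof -
  have "inj_on act {x. fun_extreme_point_of x S}" using act_inj by (auto intro: inj_onI)
  moreover have "act ` {x. fun_extreme_point_of x S} \<subseteq> Pow C" using act_sub by auto
  ultimately show ?thesis using finC by (meson finite_Pow_iff finite_imageD finite_subset)
qed

theorem opt_extreme:
  assumes "S \<noteq> {}"
  shows "\<exists>x. fun_extreme_point_of x S \<and> (\<forall>x'\<in>S. f x \<le> f x')"
proof -
  define E where "E = {x. fun_extreme_point_of x S}"
  obtain y where "y \<in> S" using assms by auto
  then have Ene: "E \<noteq> {}" using to_extreme by (auto simp: E_def)
  have finE: "finite E" using finite_extreme by (simp add: E_def)
  have "Min (f ` E) \<in> f ` E" using finE Ene by (intro Min_in) auto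
  then obtain x where x: "x \<in> E" "f x = Min (f ` E)" by auto
  have "f x \<le> f x'" if x'S: "x' \<in> S" for x'
  proof -
    obtain e where e: "fun_extreme_point_of e S" "f e \<le> f x'" using to_extreme[OF x'S] by blast
    have "f x \<le> f e" using x e finE by (simp add: E_def)
    then show ?thesis using e by simp
  qed
  then show ?thesis using x by (auto simp: E_def)
qed

end

lemma Lf_var[intro]: "Lf (\<lambda>x. x v)" by (simp add: Lf_def comb_def)
lemma Lf_const[intro]: "Lf (\<lambda>x. c)" by (simp add: Lf_def algebra_simps)
lemma Lf_add[intro]: "Lf g1 \<Longrightarrow> Lf g2 \<Longrightarrow> Lf (\<lambda>x. g1 x + g2 x)"
  by (simp add: Lf_def algebra_simps)
lemma Lf_diff[intro]: "Lf g1 \<Longrightarrow> Lf g2 \<Longrightarrow> Lf (\<lambda>x. g1 x - g2 x)"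
  by (simp add: Lf_def algebra_simps)
lemma Lf_cmult[intro]: "Lf g \<Longrightarrow> Lf (\<lambda>x. c * g x)"
  by (simp add: Lf_def LfD algebra_simps)
lemma Lf_neg[intro]: "Lf g \<Longrightarrow> Lf (\<lambda>x. - g x)"
  by (simp add: Lf_def LfD algebra_simps)
lemma Lf_if[intro]: "Lf g1 \<Longrightarrow> Lf g2 \<Longrightarrow> Lf (\<lambda>x. if P then g1 x else g2 x)"
  by (simp add: Lf_def)
lemma Lf_sum[intro]: "(\<And>i. i \<in> A \<Longrightarrow> Lf (g i)) \<Longrightarrow> Lf (\<lambda>x. \<Sum>i\<in>A. g i x)"
proof -
  assume h: "\<And>i. i \<in> A \<Longrightarrow> Lf (g i)"
  show ?thesis unfolding Lf_def
  proof (intro allI)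
    fix a b u
    have "(\<Sum>i\<in>A. g i (comb a b u)) = (\<Sum>i\<in>A. (1 - u) * g i a + u * g i b)"
      using h by (intro sum.cong) (auto simp: Lf_def)
    then show "(\<Sum>i\<in>A. g i (comb a b u)) = (1 - u) * (\<Sum>i\<in>A. g i a) + u * (\<Sum>i\<in>A. g i b)"
      by (simp add: sum.distrib sum_distrib_left)
  qed
qed

definition CC :: "('w, 'z::finite, 'i::finite, 'j::finite, 'k::finite) rcmodel
    \<Rightarrow> (('w, 'z, 'i, 'j, 'k) rcpoint \<Rightarrow> real) set" where
  "CC M = (\<lambda>v x. - x v) ` {v. valid_var M v}
   \<union> {(\<lambda>x. (\<Sum>i\<in>UNIV. x (XRBRM w z t i j)) - capREC M x z (lper M t) j) | t w z j.
        t \<in> periods M \<and> w \<in> nodes M (stage M t)}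
   \<union> {(\<lambda>x. x (XCPINV w z t k) - capCP M x z (lper M t) k) | t w z k.
        t \<in> periods M \<and> w \<in> nodes M (stage M t) \<and> k \<in> KCP M}
   \<union> {(\<lambda>x. capREC M x z l j - capREC M x z l' j) | z l l' j. l \<in> Lset M \<and> l' \<in> Lset M \<and> l \<le> l'}
   \<union> {(\<lambda>x. capCP M x z l k - capCP M x z l' k) | z l l' k.
        l \<in> Lset M \<and> l' \<in> Lset M \<and> l \<le> l' \<and> k \<in> KCP M}
   \<union> {(\<lambda>x. x (YREC z l j n) - uREC M) | z l j n. l \<in> Lset M \<and> n \<in> NREC M l}
   \<union> {(\<lambda>x. x (YCP z l k n) - uCP M) | z l k n. l \<in> Lset M \<and> k \<in> KCP M \<and> n \<in> NCP M l k}"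

definition EE :: "('w, 'z::finite, 'i::finite, 'j::finite, 'k::finite) rcmodel
    \<Rightarrow> (('w, 'z, 'i, 'j, 'k) rcpoint \<Rightarrow> real) set" where
  "EE M = (\<lambda>v x. x v) ` {v. \<not> valid_var M v}
   \<union> {(\<lambda>x. (\<Sum>i\<in>UNIV. DNB M i k * dem M w z t i) - (x (XNMNB w z t k) + x (XINVNB w z t k))) | t w z k.
        t \<in> periods M \<and> w \<in> nodes M (stage M t) \<and> k \<in> KCP M}
   \<union> {(\<lambda>x. (\<Sum>i\<in>UNIV. DNB M i k * dem M w z t i) - x (XNMNB w z t k)) | t w z k.
        t \<in> periods M \<and> w \<in> nodes M (stage M t) \<and> k \<notin> KCP M}
   \<union> {(\<lambda>x. (\<Sum>k'\<in>KCP M. DCP M k' k * x (XCPINV w z t k')) - (x (XNMCP w z t k) + x (XMCCP w z t k))) | t w z k.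
        t \<in> periods M \<and> w \<in> nodes M (stage M t) \<and> k \<notin> KCP M}
   \<union> {(\<lambda>x. (\<Sum>k'\<in>- KCP M. DMC M k' k * x (XMCCP w z t k')) - x (XINVMC w z t k)) | t w z k.
        t \<in> periods M \<and> w \<in> nodes M (stage M t) \<and> k \<notin> KCP M}
   \<union> {(\<lambda>x. x (XRMINV w z t k) + x (XRMS w z t k)
           - (\<Sum>i\<in>UNIV. \<Sum>j\<in>UNIV. DREC M k i j * x (XRBRM w z t i j))) | t w z k.
        t \<in> periods M \<and> w \<in> nodes M (stage M t)}
   \<union> {(\<lambda>x. x (XRB w z t i) - (prevRB M x w z t i
              + (\<Sum>z'\<in>- {z}. x (XTRRB w z' z t i) - x (XTRRB w z z' t i))
              + supp M w z t i - (\<Sum>j\<in>UNIV. x (XRBRM w z t i j)))) | t w z i.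
        t \<in> periods M \<and> w \<in> nodes M (stage M t)}
   \<union> {(\<lambda>x. x (XINV w z t k) - (prevINV M x w z t k
              + (\<Sum>z'\<in>- {z}. x (XTRRM w z' z t k) - x (XTRRM w z z' t k))
              + x (XRMINV w z t k) - x (XINVMC w z t k))) | t w z k.
        t \<in> periods M \<and> w \<in> nodes M (stage M t) \<and> k \<notin> KCP M}
   \<union> {(\<lambda>x. x (XINV w z t k) - (prevINV M x w z t k
              + (\<Sum>z'\<in>- {z}. x (XTRRM w z' z t k) - x (XTRRM w z z' t k))
              + x (XRMINV w z t k) + x (XCPINV w z t k) - x (XINVNB w z t k))) | t w z k.
        t \<in> periods M \<and> w \<in> nodes M (stage M t) \<and> k \<in> KCP M}"

lemma Lf_CC: "g \<in> CC M \<Longrightarrow> Lf g"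
  unfolding CC_def capREC_def capCP_def by (auto intro!: Lf_sum Lf_diff Lf_add Lf_cmult Lf_neg)

lemma Lf_EE: "g \<in> EE M \<Longrightarrow> Lf g"
  unfolding EE_def prevRB_def prevINV_def by (auto intro!: Lf_sum Lf_diff Lf_add Lf_cmult Lf_if)

lemma feas_iff:
  fixes M :: "('w, 'z::finite, 'i::finite, 'j::finite, 'k::finite) rcmodel"
  assumes "0 < uREC M" "0 < uCP M"
  shows "feasible M x \<longleftrightarrow> (\<forall>g\<in>EE M. g x = 0) \<and> (\<forall>g\<in>CC M. g x \<le> 0)"
proof
  assume F: "feasible M x"
  show "(\<forall>g\<in>EE M. g x = 0) \<and> (\<forall>g\<in>CC M. g x \<le> 0)"
    using F unfolding feasible_def EE_def CC_def by auto
next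
  assume G: "(\<forall>g\<in>EE M. g x = 0) \<and> (\<forall>g\<in>CC M. g x \<le> 0)"
  have inv: "x v = 0" if "\<not> valid_var M v" for v using G that unfolding EE_def by auto
  have UR: "x (YREC z l j n) \<le> uREC M" for z l j n
  proof (cases "valid_var M (YREC z l j n)")
    case True
    then have "(\<lambda>x. x (YREC z l j n) - uREC M) \<in> CC M" unfolding CC_def by auto
    then show ?thesis using G by fastforce
  next
    case False then show ?thesis using inv assms by auto
  qed
  have UC: "x (YCP z l k n) \<le> uCP M" for z l k n
  proof (cases "valid_var M (YCP z l k n)")
    case True
    then have "(\<lambda>x. x (YCP z l k n) - uCP M) \<in> CC M" unfolding CC_def by auto
    then show ?thesis using G by fastforce
  next
    case False then show ?thesis using inv assms by auto
  qed
  have E: "\<And>g. g \<in> EE M \<Longrightarrow> g x = 0" and C: "\<And>g. g \<in> CC M \<Longrightarrow> g x \<le> 0" using G by auto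
  have nn: "0 \<le> x v" if "valid_var M v" for v
  proof -
    have "(\<lambda>x. - x v) \<in> CC M" unfolding CC_def using that by (intro UnI1 image_eqI[where x=v]) auto
    from C[OF this] show ?thesis by simp
  qed
  have mono: "(\<forall>z. \<forall>l\<in>Lset M. \<forall>l'\<in>Lset M. l \<le> l' \<longrightarrow>
        (\<forall>j. capREC M x z l j \<le> capREC M x z l' j) \<and>
        (\<forall>k\<in>KCP M. capCP M x z l k \<le> capCP M x z l' k))"
  proof (intro allI ballI impI conjI)
    fix z l l' j assume "l \<in> Lset M" "l' \<in> Lset M" "l \<le> l'"
    then have "(\<lambda>x. capREC M x z l j - capREC M x z l' j) \<in> CC M" unfolding CC_def by blast
    from C[OF this] show "capREC M x z l j \<le> capREC M x z l' j" by simp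
  next
    fix z l l' k assume "l \<in> Lset M" "l' \<in> Lset M" "l \<le> l'" "k \<in> KCP M"
    then have "(\<lambda>x. capCP M x z l k - capCP M x z l' k) \<in> CC M" unfolding CC_def by blast
    from C[OF this] show "capCP M x z l k \<le> capCP M x z l' k" by simp
  qed
  have main: "\<forall>t\<in>periods M. \<forall>w\<in>nodes M (stage M t). \<forall>z.
        (\<forall>k\<in>KCP M. (\<Sum>i\<in>UNIV. DNB M i k * dem M w z t i)
                      = x (XNMNB w z t k) + x (XINVNB w z t k)) \<and>
        (\<forall>k. k \<notin> KCP M \<longrightarrow> (\<Sum>i\<in>UNIV. DNB M i k * dem M w z t i) = x (XNMNB w z t k)) \<and>
        (\<forall>k. k \<notin> KCP M \<longrightarrow> (\<Sum>k'\<in>KCP M. DCP M k' k * x (XCPINV w z t k'))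
                      = x (XNMCP w z t k) + x (XMCCP w z t k)) \<and>
        (\<forall>k. k \<notin> KCP M \<longrightarrow> (\<Sum>k'\<in>- KCP M. DMC M k' k * x (XMCCP w z t k'))
                      = x (XINVMC w z t k)) \<and>
        (\<forall>k. x (XRMINV w z t k) + x (XRMS w z t k)
                = (\<Sum>i\<in>UNIV. \<Sum>j\<in>UNIV. DREC M k i j * x (XRBRM w z t i j))) \<and>
        (\<forall>i. x (XRB w z t i) = prevRB M x w z t i
              + (\<Sum>z'\<in>- {z}. x (XTRRB w z' z t i) - x (XTRRB w z z' t i))
              + supp M w z t i - (\<Sum>j\<in>UNIV. x (XRBRM w z t i j))) \<and>
        (\<forall>k. k \<notin> KCP M \<longrightarrow> x (XINV w z t k) = prevINV M x w z t k
              + (\<Sum>z'\<in>- {z}. x (XTRRM w z' z t k) - x (XTRRM w z z' t k))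
              + x (XRMINV w z t k) - x (XINVMC w z t k)) \<and>
        (\<forall>k\<in>KCP M. x (XINV w z t k) = prevINV M x w z t k
              + (\<Sum>z'\<in>- {z}. x (XTRRM w z' z t k) - x (XTRRM w z z' t k))
              + x (XRMINV w z t k) + x (XCPINV w z t k) - x (XINVNB w z t k)) \<and>
        (\<forall>j. capREC M x z (lper M t) j \<ge> (\<Sum>i\<in>UNIV. x (XRBRM w z t i j))) \<and>
        (\<forall>k\<in>KCP M. capCP M x z (lper M t) k \<ge> x (XCPINV w z t k))"
  proof (intro ballI allI conjI impI)
    fix t w z assume tw: "t \<in> periods M" "w \<in> nodes M (stage M t)"
    {
      fix k assume k: "k \<in> KCP M"
      have "(\<lambda>x. (\<Sum>i\<in>UNIV. DNB M i k * dem M w z t i) - (x (XNMNB w z t k) + x (XINVNB w z t k))) \<in> EE M"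
        unfolding EE_def by (rule UnI1, rule UnI1, rule UnI1, rule UnI1, rule UnI1, rule UnI1, rule UnI1, rule UnI2) (use tw k in blast)
      from E[OF this] show "(\<Sum>i\<in>UNIV. DNB M i k * dem M w z t i) = x (XNMNB w z t k) + x (XINVNB w z t k)"
        by simp
    }
    {
      fix k assume k: "k \<notin> KCP M"
      have "(\<lambda>x. (\<Sum>i\<in>UNIV. DNB M i k * dem M w z t i) - x (XNMNB w z t k)) \<in> EE M"
        unfolding EE_def by (rule UnI1, rule UnI1, rule UnI1, rule UnI1, rule UnI1, rule UnI1, rule UnI2) (use tw k in blast)
      from E[OF this] show "(\<Sum>i\<in>UNIV. DNB M i k * dem M w z t i) = x (XNMNB w z t k)"
        by simp
    }
    {
      fix k assume k: "k \<notin> KCP M"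
      have "(\<lambda>x. (\<Sum>k'\<in>KCP M. DCP M k' k * x (XCPINV w z t k')) - (x (XNMCP w z t k) + x (XMCCP w z t k))) \<in> EE M"
        unfolding EE_def by (rule UnI1, rule UnI1, rule UnI1, rule UnI1, rule UnI1, rule UnI2) (use tw k in blast)
      from E[OF this] show "(\<Sum>k'\<in>KCP M. DCP M k' k * x (XCPINV w z t k')) = x (XNMCP w z t k) + x (XMCCP w z t k)"
        by simp
    }
    {
      fix k assume k: "k \<notin> KCP M"
      have "(\<lambda>x. (\<Sum>k'\<in>- KCP M. DMC M k' k * x (XMCCP w z t k')) - x (XINVMC w z t k)) \<in> EE M"
        unfolding EE_def by (rule UnI1, rule UnI1, rule UnI1, rule UnI1, rule UnI2) (use tw k in blast)
      from E[OF this] show "(\<Sum>k'\<in>- KCP M. DMC M k' k * x (XMCCP w z t k')) = x (XINVMC w z t k)"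
        by simp
    }
    {
      fix k
      have "(\<lambda>x. x (XRMINV w z t k) + x (XRMS w z t k)
           - (\<Sum>i\<in>UNIV. \<Sum>j\<in>UNIV. DREC M k i j * x (XRBRM w z t i j))) \<in> EE M"
        unfolding EE_def by (rule UnI1, rule UnI1, rule UnI1, rule UnI2) (use tw in blast)
      from E[OF this] show "x (XRMINV w z t k) + x (XRMS w z t k)
                = (\<Sum>i\<in>UNIV. \<Sum>j\<in>UNIV. DREC M k i j * x (XRBRM w z t i j))"
        by simp
    }
    {
      fix i
      have "(\<lambda>x. x (XRB w z t i) - (prevRB M x w z t i
              + (\<Sum>z'\<in>- {z}. x (XTRRB w z' z t i) - x (XTRRB w z z' t i))
              + supp M w z t i - (\<Sum>j\<in>UNIV. x (XRBRM w z t i j)))) \<in> EE M"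
        unfolding EE_def by (rule UnI1, rule UnI1, rule UnI2) (use tw in blast)
      from E[OF this] show "x (XRB w z t i) = prevRB M x w z t i
              + (\<Sum>z'\<in>- {z}. x (XTRRB w z' z t i) - x (XTRRB w z z' t i))
              + supp M w z t i - (\<Sum>j\<in>UNIV. x (XRBRM w z t i j))"
        by simp
    }
    {
      fix k assume k: "k \<notin> KCP M"
      have "(\<lambda>x. x (XINV w z t k) - (prevINV M x w z t k
              + (\<Sum>z'\<in>- {z}. x (XTRRM w z' z t k) - x (XTRRM w z z' t k))
              + x (XRMINV w z t k) - x (XINVMC w z t k))) \<in> EE M"
        unfolding EE_def by (rule UnI1, rule UnI2) (use tw k in blast)
      from E[OF this] show "x (XINV w z t k) = prevINV M x w z t k
              + (\<Sum>z'\<in>- {z}. x (XTRRM w z' z t k) - x (XTRRM w z z' t k))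
              + x (XRMINV w z t k) - x (XINVMC w z t k)"
        by simp
    }
    {
      fix k assume k: "k \<in> KCP M"
      have "(\<lambda>x. x (XINV w z t k) - (prevINV M x w z t k
              + (\<Sum>z'\<in>- {z}. x (XTRRM w z' z t k) - x (XTRRM w z z' t k))
              + x (XRMINV w z t k) + x (XCPINV w z t k) - x (XINVNB w z t k))) \<in> EE M"
        unfolding EE_def by (rule UnI2) (use tw k in blast)
      from E[OF this] show "x (XINV w z t k) = prevINV M x w z t k
              + (\<Sum>z'\<in>- {z}. x (XTRRM w z' z t k) - x (XTRRM w z z' t k))
              + x (XRMINV w z t k) + x (XCPINV w z t k) - x (XINVNB w z t k)"
        by simp
    }
    {
      fix j
      have "(\<lambda>x. (\<Sum>i\<in>UNIV. x (XRBRM w z t i j)) - capREC M x z (lper M t) j) \<in> CC M"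
        unfolding CC_def by (rule UnI1, rule UnI1, rule UnI1, rule UnI1, rule UnI1, rule UnI2) (use tw in blast)
      from C[OF this] show "capREC M x z (lper M t) j \<ge> (\<Sum>i\<in>UNIV. x (XRBRM w z t i j))"
        by simp
    }
    {
      fix k assume k: "k \<in> KCP M"
      have "(\<lambda>x. x (XCPINV w z t k) - capCP M x z (lper M t) k) \<in> CC M"
        unfolding CC_def by (rule UnI1, rule UnI1, rule UnI1, rule UnI1, rule UnI2) (use tw k in blast)
      from C[OF this] show "capCP M x z (lper M t) k \<ge> x (XCPINV w z t k)"
        by simp
    }
  qed
  show "feasible M x" unfolding feasible_def
    using inv nn mono main UR UC by blast
qed

lemma powr_concave_pos:
  assumes r: "0 < r" "r \<le> 1"
  shows "concave_on {0<..} (\<lambda>x::real. x powr r)"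
proof (rule f''_le0_imp_concave[where f' = "\<lambda>x. r * x powr (r - 1)" and f'' = "\<lambda>x. r * ((r - 1) * x powr (r - 1 - 1))"])
  show "convex {0::real<..}" by simp
  fix x :: real assume x: "x \<in> {0<..}"
  then show "((\<lambda>x. x powr r) has_real_derivative r * x powr (r - 1)) (at x)"
    by (intro has_real_derivative_powr) auto
  show "((\<lambda>x. r * x powr (r - 1)) has_real_derivative r * ((r - 1) * x powr (r - 1 - 1))) (at x)"
    using x by (intro DERIV_cmult has_real_derivative_powr) auto
  have "(r - 1) * x powr (r - 1 - 1) \<le> 0" using r by (intro mult_nonpos_nonneg) auto
  then show "r * ((r - 1) * x powr (r - 1 - 1)) \<le> 0" using r by (simp add: mult_nonneg_nonpos)
qed

lemma u_le_powr: "0 \<le> u \<Longrightarrow> u \<le> 1 \<Longrightarrow> 0 < r \<Longrightarrow> r \<le> 1 \<Longrightarrow> u \<le> u powr (r::real)"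
  using powr_mono'[of r 1 u] by (simp add: powr_one)

lemma powr_conc:
  fixes a b u r :: real
  assumes r: "0 < r" "r \<le> 1" and ab: "0 \<le> a" "0 \<le> b" and u: "0 \<le> u" "u \<le> 1"
  shows "(1 - u) * a powr r + u * b powr r \<le> ((1 - u) * a + u * b) powr r"
proof (cases "a = 0")
  case True
  have "u * b powr r \<le> u powr r * b powr r" using u_le_powr[OF u r] by (simp add: mult_right_mono)
  then show ?thesis using True u ab by (simp add: powr_mult)
next
  case a: False
  show ?thesis
  proof (cases "b = 0")
    case True
    have "(1 - u) * a powr r \<le> (1 - u) powr r * a powr r" using u_le_powr[of "1 - u" r] u r
      by (simp add: mult_right_mono)
    then show ?thesis using True u ab by (simp add: powr_mult)
  next
    case False
    then have "a \<in> {0<..}" "b \<in> {0<..}" using a ab by auto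
    from concave_onD[OF powr_concave_pos[OF r] u this] show ?thesis by simp
  qed
qed

lemma capcost_le: "(\<forall>i. 0 < r i \<and> r i \<le> 1 \<and> 0 \<le> q i) \<Longrightarrow> 0 \<le> w \<Longrightarrow> 0 \<le> y \<Longrightarrow>
    capcost q r m w y \<le> (\<Sum>i<m. q i * y powr r i) + w"
  by (auto simp: capcost_def intro!: sum_nonneg)

lemma capcost_nn: "(\<forall>i. 0 < r i \<and> r i \<le> 1 \<and> 0 \<le> q i) \<Longrightarrow> 0 \<le> w \<Longrightarrow> 0 \<le> capcost q r m w y"
  by (auto simp: capcost_def intro!: sum_nonneg add_nonneg_nonneg)

lemma capcost_conc:
  assumes P: "\<forall>i. 0 < r i \<and> r i \<le> 1 \<and> 0 \<le> q i" and w: "0 \<le> w"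
    and y: "0 \<le> y1" "0 \<le> y2" and u: "0 \<le> u" "u \<le> 1"
  shows "(1 - u) * capcost q r m w y1 + u * capcost q r m w y2 \<le> capcost q r m w ((1 - u) * y1 + u * y2)"
proof (cases "(1 - u) * y1 + u * y2 > 0")
  case True
  have "(1 - u) * capcost q r m w y1 + u * capcost q r m w y2
      \<le> (1 - u) * ((\<Sum>i<m. q i * y1 powr r i) + w) + u * ((\<Sum>i<m. q i * y2 powr r i) + w)"
    using capcost_le[OF P w y(1), of m] capcost_le[OF P w y(2), of m] u
    by (intro add_mono mult_left_mono) auto
  also have "\<dots> = ((1 - u) * (\<Sum>i<m. q i * y1 powr r i) + u * (\<Sum>i<m. q i * y2 powr r i)) + w"
    by (simp add: algebra_simps)
  also have "\<dots> = (\<Sum>i<m. (1 - u) * (q i * y1 powr r i) + u * (q i * y2 powr r i)) + w"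
    by (simp add: sum_distrib_left sum.distrib)
  also have "\<dots> = (\<Sum>i<m. q i * ((1 - u) * y1 powr r i + u * y2 powr r i)) + w"
    by (subst sum.cong[OF refl]) (auto simp: algebra_simps)
  also have "\<dots> \<le> (\<Sum>i<m. q i * ((1 - u) * y1 + u * y2) powr r i) + w"
    using P powr_conc y u by (intro add_mono sum_mono mult_left_mono) auto
  also have "\<dots> = capcost q r m w ((1 - u) * y1 + u * y2)" using True by (simp add: capcost_def)
  finally show ?thesis .
next
  case False
  then have z: "(1 - u) * y1 + u * y2 = 0" using y u by (smt (verit) mult_nonneg_nonneg)
  then have "(1 - u) * y1 = 0" "u * y2 = 0" using y u by (smt (verit) mult_nonneg_nonneg)+
  then have "(1 - u) * capcost q r m w y1 = 0" "u * capcost q r m w y2 = 0"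
    by (auto simp: capcost_def)
  moreover have "capcost q r m w ((1 - u) * y1 + u * y2) = 0" using z by (simp add: capcost_def)
  ultimately show ?thesis by linarith
qed

definition Cv :: "('v \<Rightarrow> real) set \<Rightarrow> (('v \<Rightarrow> real) \<Rightarrow> real) \<Rightarrow> bool" where
  "Cv S g \<longleftrightarrow> (\<forall>a\<in>S. \<forall>b\<in>S. \<forall>u. 0 \<le> u \<longrightarrow> u \<le> 1 \<longrightarrow> (1 - u) * g a + u * g b \<le> g (comb a b u))"

lemma Cv_Lf: "Lf g \<Longrightarrow> Cv S g" by (simp add: Cv_def LfD)
lemma Cv_add: "Cv S g1 \<Longrightarrow> Cv S g2 \<Longrightarrow> Cv S (\<lambda>x. g1 x + g2 x)"
  unfolding Cv_def by (smt (verit, best) distrib_left)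
lemma Cv_cmult: "0 \<le> c \<Longrightarrow> Cv S g \<Longrightarrow> Cv S (\<lambda>x. c * g x)"
  unfolding Cv_def
proof (intro ballI allI impI)
  fix a b and u :: real assume c: "0 \<le> c" and h: "\<forall>a\<in>S. \<forall>b\<in>S. \<forall>u. 0 \<le> u \<longrightarrow> u \<le> 1 \<longrightarrow> (1 - u) * g a + u * g b \<le> g (comb a b u)"
    and ab: "a \<in> S" "b \<in> S" and u: "0 \<le> u" "u \<le> 1"
  have "c * ((1 - u) * g a + u * g b) \<le> c * g (comb a b u)" using h ab u c by (intro mult_left_mono) auto
  then show "(1 - u) * (c * g a) + u * (c * g b) \<le> c * g (comb a b u)" by (simp add: algebra_simps)
qed
lemma Cv_sum: "(\<And>i. i \<in> A \<Longrightarrow> Cv S (g i)) \<Longrightarrow> Cv S (\<lambda>x. \<Sum>i\<in>A. g i x)"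
  unfolding Cv_def
proof (intro ballI allI impI)
  fix a b and u :: real assume h: "\<And>i. i \<in> A \<Longrightarrow> \<forall>a\<in>S. \<forall>b\<in>S. \<forall>u. 0 \<le> u \<longrightarrow> u \<le> 1 \<longrightarrow> (1 - u) * g i a + u * g i b \<le> g i (comb a b u)"
    and ab: "a \<in> S" "b \<in> S" and u: "0 \<le> u" "u \<le> 1"
  have "(1 - u) * (\<Sum>i\<in>A. g i a) + u * (\<Sum>i\<in>A. g i b) = (\<Sum>i\<in>A. (1 - u) * g i a + u * g i b)"
    by (simp add: sum.distrib sum_distrib_left)
  also have "\<dots> \<le> (\<Sum>i\<in>A. g i (comb a b u))" using h ab u by (intro sum_mono) auto
  finally show "(1 - u) * (\<Sum>i\<in>A. g i a) + u * (\<Sum>i\<in>A. g i b) \<le> (\<Sum>i\<in>A. g i (comb a b u))" .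
qed
lemma Cv_capcost:
  assumes "\<forall>i. 0 < r i \<and> r i \<le> 1 \<and> 0 \<le> q i" "0 \<le> w" "\<forall>x\<in>S. 0 \<le> x v"
  shows "Cv S (\<lambda>x. capcost q r m w (x v))"
  unfolding Cv_def comb_def using capcost_conc[OF assms(1,2)] assms(3) by auto

lemma fin4: "finite {(a, b, c, d). P a b c d} \<Longrightarrow> finite {F a b c d | a b c d. P a b c d}"
proof -
  assume "finite {(a, b, c, d). P a b c d}"
  moreover have "{F a b c d | a b c d. P a b c d} = (\<lambda>(a, b, c, d). F a b c d) ` {(a, b, c, d). P a b c d}"
    by force
  ultimately show ?thesis by simp
qed

lemma finite_periods[simp]: "finite (periods M)" by (simp add: periods_def)

lemma fin_valid:
  fixes M :: "('w, 'z::finite, 'i::finite, 'j::finite, 'k::finite) rcmodel"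
  assumes fin_nodes: "\<forall>t\<in>periods M. finite (nodes M (stage M t))"
    and fin_L: "finite (Lset M)"
    and fin_NREC: "\<forall>l\<in>Lset M. finite (NREC M l)"
    and fin_NCP: "\<forall>l\<in>Lset M. \<forall>k\<in>KCP M. finite (NCP M l k)"
  shows "finite {v. valid_var M v}"
proof -
  define A :: "('w, 'z, 'i, 'j, 'k) rcvar set"
    where "A = (\<Union>t\<in>periods M. \<Union>w\<in>nodes M (stage M t). \<Union>z::'z. \<Union>z'::'z. \<Union>k::'k. \<Union>i::'i. \<Union>j::'j.
     {XNMNB w z t k, XINVNB w z t k, XCPINV w z t k, XNMCP w z t k, XMCCP w z t k, XINVMC w z t k,
      XRMINV w z t k, XRMS w z t k, XINV w z t k, XRB w z t i, XRBRM w z t i j, XTRRB w z z' t i,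
      XTRRM w z z' t k})"
  define B :: "('w, 'z, 'i, 'j, 'k) rcvar set" where "B = (\<Union>l\<in>Lset M. \<Union>n\<in>NREC M l. \<Union>z. \<Union>j. {YREC z l j n})"
  define Cc :: "('w, 'z, 'i, 'j, 'k) rcvar set" where "Cc = (\<Union>l\<in>Lset M. \<Union>k\<in>KCP M. \<Union>n\<in>NCP M l k. \<Union>z. {YCP z l k n})"
  have "finite A" unfolding A_def using fin_nodes by (intro finite_UN_I; simp)
  moreover have "finite B" unfolding B_def using fin_L fin_NREC by auto
  moreover have "finite Cc" unfolding Cc_def using fin_L fin_NCP by auto
  moreover have "{v. valid_var M v} \<subseteq> A \<union> B \<union> Cc"
  proof
    fix v assume "v \<in> {v. valid_var M v}"
    then show "v \<in> A \<union> B \<union> Cc"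
      by (cases v) (auto simp: node_ok_def A_def B_def Cc_def)
  qed
  ultimately show ?thesis by (meson finite_UnI finite_subset)
qed

lemma fin_CC:
  fixes M :: "('w, 'z::finite, 'i::finite, 'j::finite, 'k::finite) rcmodel"
  assumes fin_nodes: "\<forall>t\<in>periods M. finite (nodes M (stage M t))"
    and fin_L: "finite (Lset M)"
    and fin_NREC: "\<forall>l\<in>Lset M. finite (NREC M l)"
    and fin_NCP: "\<forall>l\<in>Lset M. \<forall>k\<in>KCP M. finite (NCP M l k)"
  shows "finite (CC M)"
proof -
  have fT: "finite (SIGMA t:periods M. nodes M (stage M t) \<times> (UNIV :: ('z \<times> 'k) set))"
    using fin_nodes by auto
  have fT': "finite (SIGMA t:periods M. nodes M (stage M t) \<times> (UNIV :: ('z \<times> 'j) set))"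
    using fin_nodes by auto
  show ?thesis unfolding CC_def
    apply (intro finite_UnI)
    subgoal using fin_valid[OF assms] by simp
    subgoal by (rule fin4, rule finite_subset[OF _ fT']) auto
    subgoal by (rule fin4, rule finite_subset[OF _ fT]) auto
    subgoal by (rule fin4, rule finite_subset[of _ "UNIV \<times> Lset M \<times> Lset M \<times> UNIV"]) (auto simp: fin_L)
    subgoal by (rule fin4, rule finite_subset[of _ "UNIV \<times> Lset M \<times> Lset M \<times> UNIV"]) (auto simp: fin_L)
    subgoal by (rule fin4, rule finite_subset[of _ "UNIV \<times> (SIGMA l:Lset M. UNIV \<times> NREC M l)"])
         (auto simp: fin_L fin_NREC)
    subgoal by (rule fin4, rule finite_subset[of _ "UNIV \<times> (SIGMA l:Lset M. SIGMA k:KCP M. NCP M l k)"])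
         (auto simp: fin_L fin_NCP)
    done
qed

lemma feas_nn: "feasible M x \<Longrightarrow> valid_var M v \<Longrightarrow> 0 \<le> x v"
  by (simp add: feasible_def)

lemma feas_inv: "feasible M x \<Longrightarrow> \<not> valid_var M v \<Longrightarrow> x v = 0"
  by (simp add: feasible_def)

lemma obj_Cv:
  fixes M :: "('w, 'z::finite, 'i::finite, 'j::finite, 'k::finite) rcmodel"
  assumes lper_in: "\<forall>t\<in>periods M. lper M t \<in> Lset M"
    and gamma: "0 \<le> gamma M" "gamma M < 1"
    and fREC_form: "\<forall>z j i. 0 < rREC M z j i \<and> rREC M z j i \<le> 1 \<and> 0 \<le> qREC M z j i"
                   "\<forall>z j. 0 \<le> wREC M z j"
    and fCP_form: "\<forall>z k i. 0 < rCP M z k i \<and> rCP M z k i \<le> 1 \<and> 0 \<le> qCP M z k i"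
                  "\<forall>z k. 0 \<le> wCP M z k"
  shows "Cv (feasible_region M) (\<lambda>x. objective M x)"
  unfolding objective_def
proof (rule Cv_sum)
  fix t assume t: "t \<in> periods M"
  show "Cv (feasible_region M) (\<lambda>x. (1 - gamma M) ^ (t - 1) *
      (CPL M x t + (\<Sum>w\<in>nodes M (stage M t). prob M w * COP M x w t)))"
  proof (rule Cv_cmult)
    show "0 \<le> (1 - gamma M) ^ (t - 1)" using gamma by simp
    show "Cv (feasible_region M) (\<lambda>x. CPL M x t + (\<Sum>w\<in>nodes M (stage M t). prob M w * COP M x w t))"
    proof (rule Cv_add)
      have l: "lper M t \<in> Lset M" using lper_in t by auto
      show "Cv (feasible_region M) (\<lambda>x. CPL M x t)" unfolding CPL_def fREC_def fCP_def
        by (intro Cv_sum Cv_add Cv_capcost)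
           (auto simp: fREC_form fCP_form feasible_region_def l intro!: feas_nn)
      show "Cv (feasible_region M) (\<lambda>x. \<Sum>w\<in>nodes M (stage M t). prob M w * COP M x w t)"
        unfolding COP_def
        by (intro Cv_Lf Lf_sum Lf_cmult Lf_add Lf_diff Lf_var)
    qed
  qed
qed

definition Kb :: "('w, 'z::finite, 'i::finite, 'j::finite, 'k::finite) rcmodel \<Rightarrow> nat \<Rightarrow> 'k \<Rightarrow> real" where
  "Kb M t k = (\<Sum>i\<in>UNIV. \<Sum>j\<in>UNIV. DREC M k i j * (real (card (NREC M (lper M t))) * uREC M))"

lemma XRMS_bound:
  fixes M :: "('w, 'z::finite, 'i::finite, 'j::finite, 'k::finite) rcmodel"
  assumes F: "feasible M x" and t: "t \<in> periods M" and w: "w \<in> nodes M (stage M t)"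
    and DREC_nn: "\<forall>k i j. 0 \<le> DREC M k i j"
  shows "x (XRMS w z t k) \<le> Kb M t k"
proof -
  have cap: "capREC M x z (lper M t) j \<le> real (card (NREC M (lper M t))) * uREC M" for j
  proof -
    have "capREC M x z (lper M t) j \<le> (\<Sum>n\<in>NREC M (lper M t). uREC M)"
      unfolding capREC_def using F by (intro sum_mono) (simp add: feasible_def)
    then show ?thesis by simp
  qed
  have rb: "x (XRBRM w z t i j) \<le> real (card (NREC M (lper M t))) * uREC M" for i j
  proof -
    have "x (XRBRM w z t i j) \<le> (\<Sum>i'\<in>UNIV. x (XRBRM w z t i' j))"
      using F t w by (intro member_le_sum) (auto intro!: feas_nn simp: node_ok_def)
    also have "\<dots> \<le> capREC M x z (lper M t) j" using F t w by (simp add: feasible_def)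
    finally show ?thesis using cap[of j] by simp
  qed
  have "x (XRMS w z t k) \<le> x (XRMINV w z t k) + x (XRMS w z t k)"
    using F t w by (auto intro!: feas_nn simp: node_ok_def)
  also have "\<dots> = (\<Sum>i\<in>UNIV. \<Sum>j\<in>UNIV. DREC M k i j * x (XRBRM w z t i j))"
    using F t w by (simp add: feasible_def)
  also have "\<dots> \<le> Kb M t k" unfolding Kb_def
    using rb DREC_nn by (intro sum_mono mult_left_mono) auto
  finally show ?thesis .
qed

lemma COP_bound:
  fixes M :: "('w, 'z::finite, 'i::finite, 'j::finite, 'k::finite) rcmodel"
  assumes F: "feasible M x" and t: "t \<in> periods M" and w: "w \<in> nodes M (stage M t)"
    and DREC_nn: "\<forall>k i j. 0 \<le> DREC M k i j"
    and cNBNM_nn: "\<forall>w t k. 0 \<le> cNBNM M w t k"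
    and cCPNM_nn: "\<forall>w t k. 0 \<le> cCPNM M w t k"
    and cMC_nn: "\<forall>w z t k. 0 \<le> cMC M w z t k"
    and cCP_nn: "\<forall>w z t k. 0 \<le> cCP M w z t k"
    and cREC_nn: "\<forall>w z t i j. 0 \<le> cREC M w z t i j"
    and cTRRM_nn: "\<forall>z z'. 0 \<le> cTRRM M z z'"
    and cTRRB_nn: "\<forall>z z'. 0 \<le> cTRRB M z z'"
    and v_nn: "\<forall>w t k. 0 \<le> val M w t k"
    and rho: "0 \<le> rho M" and eta: "0 \<le> eta M"
  shows "(\<Sum>z\<in>(UNIV::'z set). \<Sum>k\<in>UNIV. - (val M w t k * eta M * Kb M t k)) \<le> COP M x w t"
  unfolding COP_def
proof (rule sum_mono)
  fix z :: 'z
  have nn: "0 \<le> x v" if "valid_var M v" for v using feas_nn[OF F that] .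
  have ok: "node_ok M w t" using t w by (simp add: node_ok_def)
  have A1: "0 \<le> (\<Sum>k\<in>UNIV. cNBNM M w t k * x (XNMNB w z t k))"
    using ok cNBNM_nn nn by (intro sum_nonneg mult_nonneg_nonneg) auto
  have A2: "0 \<le> (\<Sum>k\<in>- KCP M. cCPNM M w t k * x (XNMCP w z t k) + cMC M w z t k * x (XMCCP w z t k))"
    using ok cCPNM_nn cMC_nn nn by (intro sum_nonneg add_nonneg_nonneg mult_nonneg_nonneg) auto
  have A4: "0 \<le> (\<Sum>k\<in>KCP M. cCP M w z t k * x (XCPINV w z t k))"
    using ok cCP_nn nn by (intro sum_nonneg mult_nonneg_nonneg) auto
  have A5: "0 \<le> (\<Sum>i\<in>UNIV. \<Sum>j\<in>UNIV. cREC M w z t i j * x (XRBRM w z t i j))"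
    using ok cREC_nn nn by (intro sum_nonneg mult_nonneg_nonneg) auto
  have A6: "0 \<le> (\<Sum>z'\<in>- {z}. (\<Sum>k\<in>UNIV. cTRRM M z z' * x (XTRRM w z z' t k))
                    + (\<Sum>i\<in>UNIV. cTRRB M z z' * x (XTRRB w z z' t i)))"
    using ok cTRRM_nn cTRRB_nn nn by (intro sum_nonneg add_nonneg_nonneg mult_nonneg_nonneg) auto
  have A3: "(\<Sum>k\<in>UNIV. - (val M w t k * eta M * Kb M t k))
      \<le> (\<Sum>k\<in>UNIV. val M w t k * (rho M * x (XINV w z t k) - eta M * x (XRMS w z t k)))"
  proof (rule sum_mono)
    fix k
    have "0 \<le> rho M * x (XINV w z t k)" using rho nn ok by simp
    moreover have "eta M * x (XRMS w z t k) \<le> eta M * Kb M t k"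
      using XRMS_bound[OF F t w DREC_nn] eta by (intro mult_left_mono) auto
    ultimately have "- (eta M * Kb M t k) \<le> rho M * x (XINV w z t k) - eta M * x (XRMS w z t k)"
      by linarith
    then have "val M w t k * (- (eta M * Kb M t k)) \<le> val M w t k * (rho M * x (XINV w z t k) - eta M * x (XRMS w z t k))"
      using v_nn by (intro mult_left_mono) auto
    then show "- (val M w t k * eta M * Kb M t k) \<le> val M w t k * (rho M * x (XINV w z t k) - eta M * x (XRMS w z t k))"
      by (simp add: algebra_simps)
  qed
  show "(\<Sum>k\<in>UNIV. - (val M w t k * eta M * Kb M t k)) \<le>
      (\<Sum>k\<in>UNIV. cNBNM M w t k * x (XNMNB w z t k)) +
      (\<Sum>k\<in>- KCP M. cCPNM M w t k * x (XNMCP w z t k) + cMC M w z t k * x (XMCCP w z t k)) +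
      (\<Sum>k\<in>UNIV. val M w t k * (rho M * x (XINV w z t k) - eta M * x (XRMS w z t k))) +
      (\<Sum>k\<in>KCP M. cCP M w z t k * x (XCPINV w z t k)) +
      (\<Sum>i\<in>UNIV. \<Sum>j\<in>UNIV. cREC M w z t i j * x (XRBRM w z t i j)) +
      (\<Sum>z'\<in>- {z}. (\<Sum>k\<in>UNIV. cTRRM M z z' * x (XTRRM w z z' t k)) + (\<Sum>i\<in>UNIV. cTRRB M z z' * x (XTRRB w z z' t i)))"
    using A1 A2 A3 A4 A5 A6 by linarith
qed

primrec cumRB :: "('w, 'z, 'i, 'j, 'k) rcmodel \<Rightarrow> 'w \<Rightarrow> 'z \<Rightarrow> 'i \<Rightarrow> nat \<Rightarrow> real" where
  "cumRB M w z i 0 = 0"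
| "cumRB M w z i (Suc t) = cumRB M (anc M w t) z i t + supp M w z (Suc t) i"

lemma cumRB_nn: "\<forall>w z t i. 0 \<le> supp M w z t i \<Longrightarrow> 0 \<le> cumRB M w z i t"
  by (induction t arbitrary: w) auto

fun xbase :: "('w, 'z::finite, 'i::finite, 'j::finite, 'k::finite) rcmodel \<Rightarrow> ('w, 'z, 'i, 'j, 'k) rcpoint" where
  "xbase M (XNMNB w z t k) = (\<Sum>i\<in>UNIV. DNB M i k * dem M w z t i)"
| "xbase M (XRB w z t i) = cumRB M w z i t"
| "xbase M _ = 0"


definition x0 :: "('w, 'z::finite, 'i::finite, 'j::finite, 'k::finite) rcmodel \<Rightarrow> ('w, 'z, 'i, 'j, 'k) rcpoint" where
  "x0 M v = (if valid_var M v then xbase M v else 0)"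

lemma x0_feasible:
  fixes M :: "('w, 'z::finite, 'i::finite, 'j::finite, 'k::finite) rcmodel"
  assumes tree: "\<forall>t\<in>periods M. 2 \<le> t \<longrightarrow>
                 (\<forall>w\<in>nodes M (stage M t). anc M w (t - 1) \<in> nodes M (stage M (t - 1)))"
    and d_nn: "\<forall>w z t i. 0 \<le> dem M w z t i"
    and s_nn: "\<forall>w z t i. 0 \<le> supp M w z t i"
    and DNB_nn: "\<forall>i k. 0 \<le> DNB M i k"
    and u_pos: "0 < uREC M" "0 < uCP M"
  shows "feasible M (x0 M)"
proof -
  have nn: "0 \<le> x0 M v" for v
    by (cases v) (auto simp: x0_def cumRB_nn[OF s_nn] d_nn DNB_nn intro!: sum_nonneg mult_nonneg_nonneg)
  have capR: "capREC M (x0 M) z l j = 0" for z l j by (simp add: capREC_def x0_def cong: if_cong)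
  have capC: "capCP M (x0 M) z l k = 0" for z l k by (simp add: capCP_def x0_def cong: if_cong)
  have pINV: "prevINV M (x0 M) w z t k = 0" for w z t k by (simp add: prevINV_def x0_def)
  have RB: "x0 M (XRB w z t i) = prevRB M (x0 M) w z t i + supp M w z t i"
    if t: "t \<in> periods M" and w: "w \<in> nodes M (stage M t)" for w z t i
  proof (cases "t = 1")
    case True
    then show ?thesis using t w by (simp add: x0_def prevRB_def node_ok_def)
  next
    case False
    then have t2: "2 \<le> t" using t by (auto simp: periods_def)
    then have "t - 1 \<in> periods M" using t by (auto simp: periods_def)
    moreover have "anc M w (t - 1) \<in> nodes M (stage M (t - 1))" using tree t t2 w by auto
    ultimately have "prevRB M (x0 M) w z t i = cumRB M (anc M w (t - 1)) z i (t - 1)"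
      using False by (simp add: prevRB_def x0_def node_ok_def)
    moreover obtain t0 where t0: "t = Suc t0" using t2 by (cases t) auto
    moreover have "x0 M (XRB w z t i) = cumRB M w z i t" using t w by (simp add: x0_def node_ok_def)
    ultimately show ?thesis by simp
  qed
  show ?thesis unfolding feasible_def
  proof (intro conjI)
    show "\<forall>v. \<not> valid_var M v \<longrightarrow> x0 M v = 0" by (simp add: x0_def)
    show "\<forall>v. valid_var M v \<longrightarrow> 0 \<le> x0 M v" using nn by simp
    show "\<forall>z. \<forall>l\<in>Lset M. \<forall>l'\<in>Lset M. l \<le> l' \<longrightarrow>
        (\<forall>j. capREC M (x0 M) z l j \<le> capREC M (x0 M) z l' j) \<and>
        (\<forall>k\<in>KCP M. capCP M (x0 M) z l k \<le> capCP M (x0 M) z l' k)" by (simp add: capR capC)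
    show "\<forall>z l j n. x0 M (YREC z l j n) \<le> uREC M" using u_pos by (simp add: x0_def)
    show "\<forall>z l k n. x0 M (YCP z l k n) \<le> uCP M" using u_pos by (simp add: x0_def)
    show "\<forall>t\<in>periods M. \<forall>w\<in>nodes M (stage M t). \<forall>z.
        (\<forall>k\<in>KCP M. (\<Sum>i\<in>UNIV. DNB M i k * dem M w z t i)
                      = x0 M (XNMNB w z t k) + x0 M (XINVNB w z t k)) \<and>
        (\<forall>k. k \<notin> KCP M \<longrightarrow> (\<Sum>i\<in>UNIV. DNB M i k * dem M w z t i) = x0 M (XNMNB w z t k)) \<and>
        (\<forall>k. k \<notin> KCP M \<longrightarrow> (\<Sum>k'\<in>KCP M. DCP M k' k * x0 M (XCPINV w z t k'))
                      = x0 M (XNMCP w z t k) + x0 M (XMCCP w z t k)) \<and>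
        (\<forall>k. k \<notin> KCP M \<longrightarrow> (\<Sum>k'\<in>- KCP M. DMC M k' k * x0 M (XMCCP w z t k'))
                      = x0 M (XINVMC w z t k)) \<and>
        (\<forall>k. x0 M (XRMINV w z t k) + x0 M (XRMS w z t k)
                = (\<Sum>i\<in>UNIV. \<Sum>j\<in>UNIV. DREC M k i j * x0 M (XRBRM w z t i j))) \<and>
        (\<forall>i. x0 M (XRB w z t i) = prevRB M (x0 M) w z t i
              + (\<Sum>z'\<in>- {z}. x0 M (XTRRB w z' z t i) - x0 M (XTRRB w z z' t i))
              + supp M w z t i - (\<Sum>j\<in>UNIV. x0 M (XRBRM w z t i j))) \<and>
        (\<forall>k. k \<notin> KCP M \<longrightarrow> x0 M (XINV w z t k) = prevINV M (x0 M) w z t k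
              + (\<Sum>z'\<in>- {z}. x0 M (XTRRM w z' z t k) - x0 M (XTRRM w z z' t k))
              + x0 M (XRMINV w z t k) - x0 M (XINVMC w z t k)) \<and>
        (\<forall>k\<in>KCP M. x0 M (XINV w z t k) = prevINV M (x0 M) w z t k
              + (\<Sum>z'\<in>- {z}. x0 M (XTRRM w z' z t k) - x0 M (XTRRM w z z' t k))
              + x0 M (XRMINV w z t k) + x0 M (XCPINV w z t k) - x0 M (XINVNB w z t k)) \<and>
        (\<forall>j. capREC M (x0 M) z (lper M t) j \<ge> (\<Sum>i\<in>UNIV. x0 M (XRBRM w z t i j))) \<and>
        (\<forall>k\<in>KCP M. capCP M (x0 M) z (lper M t) k \<ge> x0 M (XCPINV w z t k))"
    proof (intro ballI allI conjI impI)
      fix t w z assume t: "t \<in> periods M" and w: "w \<in> nodes M (stage M t)"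
      have ok: "node_ok M w t" using t w by (simp add: node_ok_def)
      show "x0 M (XRB w z t i) = prevRB M (x0 M) w z t i
              + (\<Sum>z'\<in>- {z}. x0 M (XTRRB w z' z t i) - x0 M (XTRRB w z z' t i))
              + supp M w z t i - (\<Sum>j\<in>UNIV. x0 M (XRBRM w z t i j))" for i
        using RB[OF t w] ok by (simp add: x0_def)
    qed (auto simp: x0_def node_ok_def capR capC pINV cong: if_cong)
  qed
qed

theorem proposition2:
  fixes M :: "('w, 'z::finite, 'i::finite, 'j::finite, 'k::finite) rcmodel"
  assumes fin_nodes: "\<forall>t\<in>periods M. finite (nodes M (stage M t))"
    and tree: "\<forall>t\<in>periods M. 2 \<le> t \<longrightarrow>
                 (\<forall>w\<in>nodes M (stage M t). anc M w (t - 1) \<in> nodes M (stage M (t - 1)))"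
    and fin_L: "finite (Lset M)"
    and lper_in: "\<forall>t\<in>periods M. lper M t \<in> Lset M"
    and fin_NREC: "\<forall>l\<in>Lset M. finite (NREC M l)"
    and fin_NCP: "\<forall>l\<in>Lset M. \<forall>k\<in>KCP M. finite (NCP M l k)"
    and d_nn: "\<forall>w z t i. 0 \<le> dem M w z t i"
    and s_nn: "\<forall>w z t i. 0 \<le> supp M w z t i"
    and DNB_nn: "\<forall>i k. 0 \<le> DNB M i k"
    and DCP_nn: "\<forall>k' k. 0 \<le> DCP M k' k"
    and DMC_nn: "\<forall>k' k. 0 \<le> DMC M k' k"
    and DREC_nn: "\<forall>k i j. 0 \<le> DREC M k i j"
    and cNBNM_nn: "\<forall>w t k. 0 \<le> cNBNM M w t k"
    and cCPNM_nn: "\<forall>w t k. 0 \<le> cCPNM M w t k"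
    and cMC_nn: "\<forall>w z t k. 0 \<le> cMC M w z t k"
    and cCP_nn: "\<forall>w z t k. 0 \<le> cCP M w z t k"
    and cREC_nn: "\<forall>w z t i j. 0 \<le> cREC M w z t i j"
    and cTRRM_nn: "\<forall>z z'. 0 \<le> cTRRM M z z'"
    and cTRRB_nn: "\<forall>z z'. 0 \<le> cTRRB M z z'"
    and v_nn: "\<forall>w t k. 0 \<le> val M w t k"
    and p_nn: "\<forall>w. 0 \<le> prob M w"
    and rho: "0 \<le> rho M" "rho M \<le> 1"
    and eta: "0 \<le> eta M" "eta M \<le> 1"
    and gamma: "0 \<le> gamma M" "gamma M < 1"
    and u_pos: "0 < uREC M" "0 < uCP M"
    and fREC_form: "\<forall>z j i. 0 < rREC M z j i \<and> rREC M z j i \<le> 1 \<and> 0 \<le> qREC M z j i"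
                   "\<forall>z j. 0 \<le> wREC M z j"
    and fCP_form: "\<forall>z k i. 0 < rCP M z k i \<and> rCP M z k i \<le> 1 \<and> 0 \<le> qCP M z k i"
                  "\<forall>z k. 0 \<le> wCP M z k"
  shows "feasible_region M \<noteq> {} \<and>
         (\<exists>x. fun_extreme_point_of x (feasible_region M) \<and>
              (\<forall>x'\<in>feasible_region M. objective M x \<le> objective M x'))"
proof -
  let ?S = "feasible_region M"
  have nn: "0 \<le> x v" if "x \<in> ?S" "valid_var M v" for x v
    using that by (simp add: feasible_region_def feasible_def)
  have Sne: "?S \<noteq> {}"
    using x0_feasible[OF tree d_nn s_nn DNB_nn u_pos] by (auto simp: feasible_region_def)
  have memS: "x \<in> ?S \<longleftrightarrow> (\<forall>g\<in>EE M. g x = 0) \<and> (\<forall>g\<in>CC M. g x \<le> 0)" for x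
    using feas_iff[OF u_pos] by (simp add: feasible_region_def)
  define LB where "LB = (\<Sum>t\<in>periods M. (1 - gamma M) ^ (t - 1) *
      (\<Sum>w\<in>nodes M (stage M t). prob M w * (\<Sum>z\<in>(UNIV::'z set). \<Sum>k\<in>UNIV. - (val M w t k * eta M * Kb M t k))))"
  have bdd: "LB \<le> objective M x" if xS: "x \<in> ?S" for x
  proof -
    have F: "feasible M x" using xS by (simp add: feasible_region_def)
    show ?thesis unfolding LB_def objective_def
    proof (rule sum_mono)
      fix t assume t: "t \<in> periods M"
      have "(\<Sum>w\<in>nodes M (stage M t). prob M w * (\<Sum>z\<in>(UNIV::'z set). \<Sum>k\<in>UNIV. - (val M w t k * eta M * Kb M t k)))
          \<le> CPL M x t + (\<Sum>w\<in>nodes M (stage M t). prob M w * COP M x w t)"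
      proof -
        have "0 \<le> CPL M x t" unfolding CPL_def fREC_def fCP_def
          by (intro sum_nonneg add_nonneg_nonneg capcost_nn) (auto simp: fREC_form fCP_form)
        moreover have "(\<Sum>w\<in>nodes M (stage M t). prob M w * (\<Sum>z\<in>(UNIV::'z set). \<Sum>k\<in>UNIV. - (val M w t k * eta M * Kb M t k)))
            \<le> (\<Sum>w\<in>nodes M (stage M t). prob M w * COP M x w t)"
          by (intro sum_mono mult_left_mono COP_bound[OF F t] )
             (auto simp: p_nn DREC_nn cNBNM_nn cCPNM_nn cMC_nn cCP_nn cREC_nn cTRRM_nn cTRRB_nn v_nn rho eta)
        ultimately show ?thesis by linarith
      qed
      then show "(1 - gamma M) ^ (t - 1) * (\<Sum>w\<in>nodes M (stage M t). prob M w * (\<Sum>z\<in>(UNIV::'z set). \<Sum>k\<in>UNIV. - (val M w t k * eta M * Kb M t k)))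
          \<le> (1 - gamma M) ^ (t - 1) * (CPL M x t + (\<Sum>w\<in>nodes M (stage M t). prob M w * COP M x w t))"
        using gamma by (intro mult_left_mono) auto
    qed
  qed
  have Cv: "Cv ?S (\<lambda>x. objective M x)"
    by (rule obj_Cv[OF lper_in gamma fREC_form fCP_form])
  interpret P: polyh ?S "CC M" "objective M" LB
  proof
    show "finite (CC M)" by (rule fin_CC[OF fin_nodes fin_L fin_NREC fin_NCP])
    show "Lf g" if "g \<in> CC M" for g using Lf_CC[OF that] .
    show "comb a b s \<in> ?S" if a: "a \<in> ?S" and b: "b \<in> ?S" and c: "\<forall>g\<in>CC M. g (comb a b s) \<le> 0" for a b s
    proof -
      have "g (comb a b s) = 0" if g: "g \<in> EE M" for g
        using LfD[OF Lf_EE[OF g]] a b g memS by auto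
      then show ?thesis using c memS by blast
    qed
    show "g x \<le> 0" if "x \<in> ?S" "g \<in> CC M" for x g using that memS by blast
    show "\<exists>g\<in>CC M. g a \<noteq> g b" if a: "a \<in> ?S" and b: "b \<in> ?S" and ne: "a \<noteq> b" for a b
    proof -
      obtain v where v: "a v \<noteq> b v" using ne by auto
      have Fa: "feasible M a" "feasible M b" using a b by (auto simp: feasible_region_def)
      have val: "valid_var M v"
      proof (rule ccontr)
        assume "\<not> valid_var M v"
        then show False using feas_inv[OF Fa(1)] feas_inv[OF Fa(2)] v by metis
      qed
      have "(\<lambda>x. - x v) \<in> CC M" unfolding CC_def using val by (intro UnI1 image_eqI[where x=v]) auto
      then show ?thesis using v by (intro bexI[of _ "\<lambda>x. - x v"]) simp_all
    qed
    show "(1 - u) * objective M a + u * objective M b \<le> objective M (comb a b u)"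
      if "a \<in> ?S" "b \<in> ?S" "0 \<le> u" "u \<le> 1" for a b u
      using Cv that unfolding Cv_def by blast
    show "LB \<le> objective M x" if "x \<in> ?S" for x using bdd[OF that] .
  qed
  show ?thesis using P.opt_extreme[OF Sne] Sne by blast
qed


end
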